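(* Let $X$ be a uniformly convex, uniformly smooth real Banach space with normalized duality map $J$. For $a,b\in S^*$ with $b\notin\{a,-a\}$, the polar $W(a,b)^\circ$ is convex if and only if $J^{-1}(\delta(a,b))\subseteq\mathcal M$ for some meridian $\mathcal M$ of $S$. Consequently, all wedges $W(a,b)$ in $X$ have convex polars if and only if $J^{-1}$ maps every meridian of $S^*$ into a meridian of $S$.
   Context: $X^*$ is the norm dual of $X$ with pairing $\langle\cdot,\cdot\rangle$; $S=\{x\in X:\|x\|=1\}$, $S^*=\{c\in X^*:\|c\|_{X^*}=1\}$. The normalized duality map $J:X\to X^*$ is defined by $\langle Jx,x\rangle=\|Jx\|_{X^*}\|x\|=\|x\|^2=\|Jx\|_{X^*}^2$; it is a homogeneous homeomorphism with inverse $J^{-1}$. A meridian of $S$ (resp. $S^*$) is a set $D\cap S$ (resp. $D^*\cap S^*$) with $D$ (resp. $D^*$) a two-dimensional linear subspace of $X$ (resp. $X^*$). For $a,b\in S^*$, $b\notin\{a,-a\}$, $\delta(a,b)=\{(\lambda a+\mu b)/\|\lambda a+\mu b\|_{X^*}:\lambda,\mu\ge0,(\lambda,\mu)\ne(0,0)\}$, and the wedge is $W(a,b)=\{x\in X:\langle c,x\rangle\le 0\ \forall c\in\delta(a,b)\}$. The polar of a closed convex cone $K$ is $K^\circ=\{x\in X:P_Kx=0\}$ with $P_K$ the metric projection onto $K$. *)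

theory Defs
  imports "HOL-Analysis.Analysis"
begin

text \<open>The norm dual of X is the type of bounded linear functionals 'a \<Rightarrow>L real
  with the operator norm; the pairing is blinfun_apply c x.\<close>

definition uniformly_convex_space :: "'a::real_normed_vector itself \<Rightarrow> bool" where
  "uniformly_convex_space _ \<longleftrightarrow>
     (\<forall>e>0. \<exists>d>0. \<forall>x y::'a. norm x \<le> 1 \<longrightarrow> norm y \<le> 1 \<longrightarrow> norm (x - y) \<ge> e
        \<longrightarrow> norm ((x + y) /\<^sub>R 2) \<le> 1 - d)"

definition uniformly_smooth_space :: "'a::real_normed_vector itself \<Rightarrow> bool" where
  "uniformly_smooth_space _ \<longleftrightarrow>
     (\<forall>e>0. \<exists>d>0. \<forall>t. 0 < t \<and> t < d \<longrightarrow>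
        (\<forall>x y::'a. norm x = 1 \<longrightarrow> norm y = 1 \<longrightarrow>
           (norm (x + t *\<^sub>R y) + norm (x - t *\<^sub>R y)) / 2 - 1 \<le> e * t))"

text \<open>Normalized duality map J (single-valued in smooth spaces).\<close>
definition duality_map :: "'a::real_normed_vector \<Rightarrow> ('a \<Rightarrow>\<^sub>L real)" where
  "duality_map x = (THE c. blinfun_apply c x = (norm x)\<^sup>2 \<and> norm c = norm x)"

definition meridian :: "'a::real_normed_vector set \<Rightarrow> bool" where
  "meridian M \<longleftrightarrow> (\<exists>D. subspace D \<and> dim D = 2 \<and> M = D \<inter> sphere 0 1)"

definition delta_arc :: "('a::real_normed_vector \<Rightarrow>\<^sub>L real) \<Rightarrow> ('a \<Rightarrow>\<^sub>L real) \<Rightarrow> ('a \<Rightarrow>\<^sub>L real) set" where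
  "delta_arc a b = {(1 / norm (l *\<^sub>R a + m *\<^sub>R b)) *\<^sub>R (l *\<^sub>R a + m *\<^sub>R b) | l m.
       l \<ge> 0 \<and> m \<ge> 0 \<and> (l, m) \<noteq> (0, 0)}"

definition wedge :: "('a::real_normed_vector \<Rightarrow>\<^sub>L real) \<Rightarrow> ('a \<Rightarrow>\<^sub>L real) \<Rightarrow> 'a set" where
  "wedge a b = {x. \<forall>c\<in>delta_arc a b. blinfun_apply c x \<le> 0}"

definition metric_proj :: "'a::metric_space set \<Rightarrow> 'a \<Rightarrow> 'a" where
  "metric_proj K x = (THE y. y \<in> K \<and> (\<forall>z\<in>K. dist x y \<le> dist x z))"

definition polar_cone :: "'a::real_normed_vector set \<Rightarrow> 'a set" where
  "polar_cone K = {x. metric_proj K x = 0}"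

end

theory Submission
  imports Defs
begin

definition dq :: "'a::real_normed_vector \<Rightarrow> 'a \<Rightarrow> real \<Rightarrow> real" where
  "dq x h t = (norm (x + t *\<^sub>R h) - norm x) / t"

definition gd :: "'a::real_normed_vector \<Rightarrow> 'a \<Rightarrow> real" where
  "gd x h = Inf (dq x h ` {0<..})"

lemma dq_bound: assumes "t > 0" shows "\<bar>dq x h t\<bar> \<le> norm h"
proof -
  have "\<bar>norm (x + t *\<^sub>R h) - norm x\<bar> \<le> norm (t *\<^sub>R h)"
    by (metis add_diff_cancel_left' norm_triangle_ineq3)
  also have "\<dots> = t * norm h" using assms by simp
  finally show ?thesis using assms unfolding dq_def by (simp add: abs_div divide_le_eq mult.commute)
qed

lemma dq_mono: assumes "0 < s" "s \<le> t" shows "dq x h s \<le> dq x h t"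
proof -
  have t: "t > 0" using assms by simp
  have eq: "x + s *\<^sub>R h = (1 - s/t) *\<^sub>R x + (s/t) *\<^sub>R (x + t *\<^sub>R h)"
    using t by (simp add: algebra_simps)
  have "norm (x + s *\<^sub>R h) \<le> norm ((1 - s/t) *\<^sub>R x) + norm ((s/t) *\<^sub>R (x + t *\<^sub>R h))"
    unfolding eq by (rule norm_triangle_ineq)
  also have "\<dots> = (1 - s/t) * norm x + (s/t) * norm (x + t *\<^sub>R h)"
    using assms t by simp
  finally have "norm (x + s *\<^sub>R h) - norm x \<le> (s/t) * (norm (x + t *\<^sub>R h) - norm x)"
    by (simp add: algebra_simps)
  then have "(norm (x + s *\<^sub>R h) - norm x) / s \<le> (norm (x + t *\<^sub>R h) - norm x) / t"
    using assms t by (simp add: divide_simps mult.commute)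
  then show ?thesis unfolding dq_def .
qed

lemma dq_bdd: "bdd_below (dq x h ` {0<..})"
  unfolding bdd_below_def using dq_bound by (metis abs_le_D2 greaterThan_iff imageE minus_le_iff)

lemma gd_le: "t > 0 \<Longrightarrow> gd x h \<le> dq x h t"
  unfolding gd_def by (rule cInf_lower) (auto intro: dq_bdd)

lemma gd_greatest: "(\<And>t. t > 0 \<Longrightarrow> m \<le> dq x h t) \<Longrightarrow> m \<le> gd x h"
  unfolding gd_def by (rule cInf_greatest) auto

lemma gd_bound: "\<bar>gd x h\<bar> \<le> norm h"
proof -
  have "gd x h \<le> dq x h 1" by (rule gd_le) simp
  moreover have "dq x h 1 \<le> norm h" using dq_bound[of 1 x h] by simp
  moreover have "- norm h \<le> gd x h"
  proof (rule gd_greatest)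
    fix t :: real assume "t > 0" then show "- norm h \<le> dq x h t" using dq_bound[of t x h] by linarith
  qed
  ultimately show ?thesis by simp
qed

lemma gd_approx: assumes "e > 0" shows "\<exists>t>0. \<forall>s. 0 < s \<and> s \<le> t \<longrightarrow> dq x h s < gd x h + e"
proof -
  have "\<exists>t>0. dq x h t < gd x h + e"
  proof (rule ccontr)
    assume "\<not> ?thesis"
    then have *: "\<forall>t>0. gd x h + e \<le> dq x h t" by (meson not_less)
    have "gd x h + e \<le> gd x h"
    proof (rule gd_greatest)
      fix t :: real assume "t > 0" with * show "gd x h + e \<le> dq x h t" by blast
    qed
    then show False using assms by simp
  qed
  then obtain t where t: "t > 0" "dq x h t < gd x h + e" by blast
  show ?thesis
  proof (intro exI[of _ t] conjI allI impI)
    fix s assume "0 < s \<and> s \<le> t"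
    then have "dq x h s \<le> dq x h t" by (intro dq_mono) auto
    then show "dq x h s < gd x h + e" using t by linarith
  qed (use t in auto)
qed

lemma gd_subadd: "gd x (h1 + h2) \<le> gd x h1 + gd x h2"
proof (rule field_le_epsilon)
  fix e :: real assume e: "e > 0"
  obtain t1 where t1: "t1 > 0" "\<And>s. 0 < s \<and> s \<le> t1 \<Longrightarrow> dq x h1 s < gd x h1 + e/2"
    using gd_approx[of "e/2" x h1] e by auto
  obtain t2 where t2: "t2 > 0" "\<And>s. 0 < s \<and> s \<le> t2 \<Longrightarrow> dq x h2 s < gd x h2 + e/2"
    using gd_approx[of "e/2" x h2] e by auto
  define t where "t = min t1 t2 / 2"
  have t: "t > 0" "2*t \<le> t1" "2*t \<le> t2" using t1 t2 by (auto simp: t_def)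
  have xx: "x = (1/2) *\<^sub>R x + (1/2) *\<^sub>R x" by (simp flip: scaleR_add_left)
  have eq: "x + t *\<^sub>R (h1 + h2) = (1/2) *\<^sub>R (x + (2*t) *\<^sub>R h1) + (1/2) *\<^sub>R (x + (2*t) *\<^sub>R h2)"
    by (subst xx) (simp add: algebra_simps)
  define N where "N = norm (x + t *\<^sub>R (h1 + h2))"
  define A where "A = norm (x + (2*t) *\<^sub>R h1)"
  define B where "B = norm (x + (2*t) *\<^sub>R h2)"
  have "N \<le> norm ((1/2) *\<^sub>R (x + (2*t) *\<^sub>R h1)) + norm ((1/2) *\<^sub>R (x + (2*t) *\<^sub>R h2))"
    unfolding N_def eq by (rule norm_triangle_ineq)
  also have "\<dots> = (A + B) / 2" unfolding A_def B_def by (simp only: norm_scaleR) simp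
  finally have "N - norm x \<le> (A + B) / 2 - norm x" by simp
  then have "(N - norm x) / t \<le> ((A + B) / 2 - norm x) / t"
    using t by (intro divide_right_mono) auto
  also have "((A + B) / 2 - norm x) / t = (A - norm x) / (2*t) + (B - norm x) / (2*t)"
    using t by (simp add: field_simps)
  finally have "dq x (h1 + h2) t \<le> dq x h1 (2*t) + dq x h2 (2*t)"
    unfolding dq_def N_def A_def B_def .
  moreover have "dq x h1 (2*t) < gd x h1 + e/2" using t by (intro t1(2)) simp
  moreover have "dq x h2 (2*t) < gd x h2 + e/2" using t by (intro t2(2)) simp
  moreover have "gd x (h1 + h2) \<le> dq x (h1 + h2) t" using t(1) by (rule gd_le)
  ultimately show "gd x (h1 + h2) \<le> gd x h1 + gd x h2 + e" by linarith
qed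

lemma dq_scale: assumes "r > 0" shows "dq x (r *\<^sub>R h) t = r * dq x h (r * t)"
proof -
  have 1: "t *\<^sub>R (r *\<^sub>R h) = (r * t) *\<^sub>R h" by (simp add: mult.commute)
  have 2: "r * (z / (r * t)) = z / t" for z :: real using assms by simp
  show ?thesis unfolding dq_def 1 2 ..
qed

lemma gd_scale_pos: assumes r: "r > 0" shows "gd x (r *\<^sub>R h) = r * gd x h"
proof (rule antisym)
  show "gd x (r *\<^sub>R h) \<le> r * gd x h"
  proof -
    have "gd x (r *\<^sub>R h) / r \<le> gd x h"
    proof (rule gd_greatest)
      fix t :: real assume t: "t > 0"
      have "gd x (r *\<^sub>R h) \<le> dq x (r *\<^sub>R h) (t / r)" using t r by (intro gd_le) simp
      also have "\<dots> = r * dq x h t" using r by (simp add: dq_scale)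
      finally show "gd x (r *\<^sub>R h) / r \<le> dq x h t" using r by (simp add: divide_simps mult.commute)
    qed
    then show ?thesis using r by (simp add: divide_simps mult.commute)
  qed
  show "r * gd x h \<le> gd x (r *\<^sub>R h)"
  proof (rule gd_greatest)
    fix t :: real assume t: "t > 0"
    have "r * gd x h \<le> r * dq x h (r * t)" using r t by (intro mult_left_mono gd_le) auto
    also have "\<dots> = dq x (r *\<^sub>R h) t" using r by (simp add: dq_scale)
    finally show "r * gd x h \<le> dq x (r *\<^sub>R h) t" .
  qed
qed

lemma gd_const: assumes "\<And>t. t > 0 \<Longrightarrow> dq x h t = k" shows "gd x h = k"
proof -
  have "dq x h ` {0<..} = {k}"
  proof
    show "dq x h ` {0<..} \<subseteq> {k}" using assms by auto
    have "dq x h 1 = k" using assms by simp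
    then show "{k} \<subseteq> dq x h ` {0<..}" by (metis empty_subsetI greaterThan_iff image_eqI insert_subset zero_less_one)
  qed
  then show ?thesis unfolding gd_def by simp
qed

lemma gd_zero: "gd x 0 = 0"
  by (rule gd_const) (simp add: dq_def)

lemma gd_self: "gd x x = norm x"
proof (rule gd_const)
  fix t :: real assume t: "t > 0"
  have "x + t *\<^sub>R x = (1 + t) *\<^sub>R x" by (simp add: algebra_simps)
  then have "norm (x + t *\<^sub>R x) = (1 + t) * norm x" using t by simp
  then show "dq x x t = norm x" using t unfolding dq_def by (simp add: algebra_simps)
qed


lemma gd_odd:
  assumes us: "uniformly_smooth_space TYPE('a::real_normed_vector)" and x: "(x::'a) \<noteq> 0"
  shows "gd x (-h) = - gd x h"
proof -
  have ge: "0 \<le> gd x h + gd x (-h)" using gd_subadd[of x h "-h"] by (simp add: gd_zero)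
  have le: "gd x h + gd x (-h) \<le> 0"
  proof (cases "h = 0")
    case True then show ?thesis by (simp add: gd_zero)
  next
    case hnz: False
    show ?thesis
    proof (rule field_le_epsilon)
      fix e :: real assume e: "e > 0"
      define n where "n = norm x"
      have n: "n > 0" using x by (simp add: n_def)
      have hn: "norm h > 0" using hnz by simp
      obtain d where d: "d > 0" and dd: "\<And>t. 0 < t \<and> t < d \<Longrightarrow> (\<forall>x y::'a. norm x = 1 \<longrightarrow> norm y = 1 \<longrightarrow>
           (norm (x + t *\<^sub>R y) + norm (x - t *\<^sub>R y)) / 2 - 1 \<le> (e / (2 * norm h)) * t)"
        using us e hn unfolding uniformly_smooth_space_def
        by (metis divide_pos_pos mult_pos_pos zero_less_numeral)
      define t where "t = d / 2"
      have t: "0 < t" "t < d" using d by (auto simp: t_def)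
      define x' where "x' = (1/n) *\<^sub>R x"
      define y' where "y' = (1 / norm h) *\<^sub>R h"
      have nx': "norm x' = 1" using n by (simp add: x'_def n_def)
      have ny': "norm y' = 1" using hn by (simp add: y'_def)
      have key: "(norm (x' + t *\<^sub>R y') + norm (x' - t *\<^sub>R y')) / 2 - 1 \<le> (e / (2 * norm h)) * t"
        using dd[OF conjI[OF t]] nx' ny' by blast
      define s where "s = t * n / norm h"
      have s: "s > 0" using t n hn by (simp add: s_def)
      have e1: "x + s *\<^sub>R h = n *\<^sub>R (x' + t *\<^sub>R y')"
        using n hn by (simp add: x'_def y'_def s_def algebra_simps)
      have e2: "x + s *\<^sub>R (-h) = n *\<^sub>R (x' - t *\<^sub>R y')"
        using n hn by (simp add: x'_def y'_def s_def algebra_simps)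
      have "norm (x + s *\<^sub>R h) + norm (x + s *\<^sub>R (-h)) = n * (norm (x' + t *\<^sub>R y') + norm (x' - t *\<^sub>R y'))"
        unfolding e1 e2 by (simp only: norm_scaleR abs_of_pos[OF n] distrib_left)
      also have "\<dots> \<le> n * (2 + e * t / norm h)"
        using key n by (intro mult_left_mono) (auto simp: field_simps)
      finally have sum: "norm (x + s *\<^sub>R h) + norm (x + s *\<^sub>R (-h)) - 2 * n \<le> n * e * t / norm h"
        by (simp add: algebra_simps)
      have "dq x h s + dq x (-h) s = (norm (x + s *\<^sub>R h) + norm (x + s *\<^sub>R (-h)) - 2 * n) / s"
        unfolding dq_def n_def by (simp add: diff_divide_distrib add_divide_distrib)
      also have "\<dots> \<le> (n * e * t / norm h) / s"
        using sum s by (intro divide_right_mono) auto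
      also have "\<dots> = e" using n hn t by (simp add: s_def field_simps)
      finally have "dq x h s + dq x (-h) s \<le> e" .
      moreover have "gd x h \<le> dq x h s" "gd x (-h) \<le> dq x (-h) s" using s by (auto intro: gd_le)
      ultimately show "gd x h + gd x (-h) \<le> 0 + e" by linarith
    qed
  qed
  from ge le show ?thesis by linarith
qed

lemma gd_linear:
  assumes us: "uniformly_smooth_space TYPE('a::real_normed_vector)" and x: "(x::'a) \<noteq> 0"
  shows "bounded_linear (gd x)"
proof (rule bounded_linear_intro)
  fix h1 h2 :: 'a
  have "gd x (h1 + h2) \<le> gd x h1 + gd x h2" by (rule gd_subadd)
  moreover have "gd x (-(h1 + h2)) \<le> gd x (-h1) + gd x (-h2)"
    using gd_subadd[of x "-h1" "-h2"] by (simp add: add.commute)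
  ultimately show "gd x (h1 + h2) = gd x h1 + gd x h2"
    using gd_odd[OF us x] by (metis add.inverse_distrib_swap add.commute antisym minus_add_distrib neg_le_iff_le)
next
  fix r :: real and h :: 'a
  show "gd x (r *\<^sub>R h) = r *\<^sub>R gd x h"
  proof (cases "r > 0")
    case True then show ?thesis by (simp add: gd_scale_pos)
  next
    case False
    show ?thesis
    proof (cases "r = 0")
      case True then show ?thesis by (simp add: gd_zero)
    next
      case False
      with \<open>\<not> r > 0\<close> have r: "-r > 0" by simp
      have 1: "gd x ((-r) *\<^sub>R h) = (-r) * gd x h" by (rule gd_scale_pos[OF r])
      have 2: "gd x (- ((-r) *\<^sub>R h)) = - gd x ((-r) *\<^sub>R h)" by (rule gd_odd[OF us x])
      have 3: "- ((-r) *\<^sub>R h) = r *\<^sub>R h" by simp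
      from 1 2 3 show ?thesis by simp
    qed
  qed
next
  fix h :: 'a
  show "norm (gd x h) \<le> norm h * 1" using gd_bound[of x h] by simp
qed

definition Jd :: "'a::real_normed_vector \<Rightarrow> ('a \<Rightarrow>\<^sub>L real)" where
  "Jd x = Blinfun (\<lambda>h. norm x * gd x h)"

lemma Jd_apply:
  assumes us: "uniformly_smooth_space TYPE('a::real_normed_vector)"
  shows "blinfun_apply (Jd (x::'a)) h = norm x * gd x h"
proof (cases "x = 0")
  case True
  have "(\<lambda>h. norm x * gd x h) = (\<lambda>h. 0)" using True by simp
  then show ?thesis unfolding Jd_def using True by (simp add: bounded_linear_Blinfun_apply)
next
  case False
  have "bounded_linear (\<lambda>h. norm x * gd x h)"
    using gd_linear[OF us False] by (rule bounded_linear_const_mult)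
  then show ?thesis unfolding Jd_def by (simp add: bounded_linear_Blinfun_apply)
qed

lemma dm_unique_apply:
  assumes us: "uniformly_smooth_space TYPE('a::real_normed_vector)"
    and cx: "blinfun_apply c (x::'a) = (norm x)^2" and cn: "norm c \<le> norm x"
  shows "blinfun_apply c h = norm x * gd x h"
proof (cases "x = 0")
  case True
  then have "norm c = 0" using cn by simp
  then show ?thesis using True by simp
next
  case xnz: False
  have n: "norm x > 0" using xnz by simp
  have up: "blinfun_apply c k / norm x \<le> gd x k" for k
  proof (rule gd_greatest)
    fix t :: real assume t: "t > 0"
    have "(norm x)^2 + t * blinfun_apply c k = blinfun_apply c (x + t *\<^sub>R k)"
      using cx by (simp add: blinfun.add_right blinfun.scaleR_right)
    also have "\<dots> \<le> norm c * norm (x + t *\<^sub>R k)"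
      by (metis norm_blinfun real_norm_def abs_ge_self order_trans)
    also have "\<dots> \<le> norm x * norm (x + t *\<^sub>R k)" using cn by (intro mult_right_mono) auto
    finally have "t * blinfun_apply c k \<le> norm x * (norm (x + t *\<^sub>R k) - norm x)"
      by (simp add: algebra_simps power2_eq_square)
    then have "blinfun_apply c k / norm x \<le> (norm (x + t *\<^sub>R k) - norm x) / t"
      using n t by (simp add: field_simps mult.commute)
    then show "blinfun_apply c k / norm x \<le> dq x k t" unfolding dq_def .
  qed
  have a: "blinfun_apply c h / norm x \<le> gd x h" by (rule up)
  have b: "blinfun_apply c (-h) / norm x \<le> gd x (-h)" by (rule up)
  then have "- (blinfun_apply c h / norm x) \<le> - gd x h"
    using gd_odd[OF us xnz] by (simp add: blinfun.minus_right)
  with a have "blinfun_apply c h / norm x = gd x h" by linarith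
  then show ?thesis using n by (simp add: field_simps)
qed

lemma Jd_self:
  assumes us: "uniformly_smooth_space TYPE('a::real_normed_vector)"
  shows "blinfun_apply (Jd (x::'a)) x = (norm x)^2"
  by (simp add: Jd_apply[OF us] gd_self power2_eq_square)

lemma Jd_norm:
  assumes us: "uniformly_smooth_space TYPE('a::real_normed_vector)"
  shows "norm (Jd (x::'a)) = norm x"
proof (rule antisym)
  show "norm (Jd x) \<le> norm x"
  proof (rule norm_blinfun_bound)
    fix h
    have "\<bar>norm x * gd x h\<bar> \<le> norm x * norm h"
      using gd_bound[of x h] by (simp add: abs_mult mult_left_mono)
    then show "norm (blinfun_apply (Jd x) h) \<le> norm x * norm h" by (simp add: Jd_apply[OF us])
  qed simp
  show "norm x \<le> norm (Jd x)"
  proof (cases "x = 0")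
    case False
    have "(norm x)^2 \<le> norm (Jd x) * norm x"
      using norm_blinfun[of "Jd x" x] Jd_self[OF us, of x] by simp
    then show ?thesis using False by (simp add: power2_eq_square)
  qed simp
qed

lemma dm_eq_Jd:
  assumes us: "uniformly_smooth_space TYPE('a::real_normed_vector)"
  shows "duality_map (x::'a) = Jd x"
  unfolding duality_map_def
proof (rule the_equality)
  show "blinfun_apply (Jd x) x = (norm x)\<^sup>2 \<and> norm (Jd x) = norm x"
    using Jd_self[OF us] Jd_norm[OF us] by blast
next
  fix c assume "blinfun_apply c x = (norm x)\<^sup>2 \<and> norm c = norm x"
  then show "c = Jd x"
    by (intro blinfun_eqI) (simp add: dm_unique_apply[OF us] Jd_apply[OF us])
qed

lemma dm_self:
  assumes us: "uniformly_smooth_space TYPE('a::real_normed_vector)"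
  shows "blinfun_apply (duality_map (x::'a)) x = (norm x)^2"
  using Jd_self[OF us] dm_eq_Jd[OF us] by simp

lemma dm_norm:
  assumes us: "uniformly_smooth_space TYPE('a::real_normed_vector)"
  shows "norm (duality_map (x::'a)) = norm x"
  using Jd_norm[OF us] dm_eq_Jd[OF us] by simp

lemma dm_apply:
  assumes us: "uniformly_smooth_space TYPE('a::real_normed_vector)"
  shows "blinfun_apply (duality_map (x::'a)) h = norm x * gd x h"
  using Jd_apply[OF us] dm_eq_Jd[OF us] by simp

lemma dm_intro:
  assumes us: "uniformly_smooth_space TYPE('a::real_normed_vector)"
    and cx: "blinfun_apply c (x::'a) \<ge> (norm x)^2" and cn: "norm c \<le> norm x"
  shows "duality_map x = c"
proof -
  have "blinfun_apply c x \<le> norm c * norm x"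
    by (metis norm_blinfun real_norm_def abs_ge_self order_trans)
  also have "\<dots> \<le> norm x * norm x" using cn by (intro mult_right_mono) auto
  finally have "blinfun_apply c x = (norm x)^2" using cx by (simp add: power2_eq_square)
  then show ?thesis
    by (intro blinfun_eqI) (simp add: dm_unique_apply[OF us _ cn] dm_apply[OF us])
qed

lemma dm_scale:
  assumes us: "uniformly_smooth_space TYPE('a::real_normed_vector)"
  shows "duality_map (r *\<^sub>R (x::'a)) = r *\<^sub>R duality_map x"
proof (rule dm_intro[OF us])
  have "blinfun_apply (r *\<^sub>R duality_map x) (r *\<^sub>R x) = r^2 * (norm x)^2"
    by (simp add: blinfun.scaleR_left blinfun.scaleR_right dm_self[OF us] power2_eq_square)
  moreover have "(norm (r *\<^sub>R x))^2 = r^2 * (norm x)^2" by (simp add: power_mult_distrib)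
  ultimately show "(norm (r *\<^sub>R x))\<^sup>2 \<le> blinfun_apply (r *\<^sub>R duality_map x) (r *\<^sub>R x)" by simp
  show "norm (r *\<^sub>R duality_map x) \<le> norm (r *\<^sub>R x)" by (simp add: dm_norm[OF us])
qed

lemma dm_neg:
  assumes us: "uniformly_smooth_space TYPE('a::real_normed_vector)"
  shows "duality_map (- (x::'a)) = - duality_map x"
  using dm_scale[OF us, of "-1" x] by simp

lemma dm_zero:
  assumes us: "uniformly_smooth_space TYPE('a::real_normed_vector)"
  shows "duality_map (0::'a) = 0"
  using dm_scale[OF us, of 0 "0::'a"] by simp


lemma uc_mid:
  assumes uc: "uniformly_convex_space TYPE('a::real_normed_vector)" and e: "e > 0"
  shows "\<exists>d>0. \<forall>x y::'a. norm x \<le> 1 \<longrightarrow> norm y \<le> 1 \<longrightarrow> norm ((x + y) /\<^sub>R 2) > 1 - d \<longrightarrow> norm (x - y) < e"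
proof -
  obtain d where d: "d > 0" and H: "\<forall>x y::'a. norm x \<le> 1 \<longrightarrow> norm y \<le> 1 \<longrightarrow> norm (x - y) \<ge> e
        \<longrightarrow> norm ((x + y) /\<^sub>R 2) \<le> 1 - d"
    using uc e unfolding uniformly_convex_space_def by blast
  show ?thesis
    by (rule exI[of _ d]) (use d H in \<open>auto simp: not_le[symmetric]\<close>)
qed

lemma blinfun_le_norm: "blinfun_apply c x \<le> norm c * norm x"
  by (metis norm_blinfun real_norm_def abs_ge_self order_trans)

lemma norm_attained:
  assumes uc: "uniformly_convex_space TYPE('a::banach)" and c1: "norm (c::'a \<Rightarrow>\<^sub>L real) = 1"
  shows "\<exists>y. norm y = 1 \<and> blinfun_apply c y = 1"
proof -
  have "\<exists>y. norm y \<le> 1 \<and> blinfun_apply c y > 1 - inverse (real (Suc n))" for n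
  proof (rule ccontr)
    define k where "k = 1 - inverse (real (Suc n))"
    have k0: "0 \<le> k" "k < 1" by (auto simp: k_def field_simps)
    assume "\<not> ?thesis"
    then have H: "\<And>y. norm y \<le> 1 \<Longrightarrow> blinfun_apply c y \<le> k" by (auto simp: k_def not_less)
    have "norm c \<le> k"
    proof (rule norm_blinfun_bound)
      fix y :: 'a
      show "norm (blinfun_apply c y) \<le> k * norm y"
      proof (cases "y = 0")
        case False
        define z where "z = (1 / norm y) *\<^sub>R y"
        have nz: "norm z \<le> 1" "norm (-z) \<le> 1" using False by (auto simp: z_def)
        have "blinfun_apply c z \<le> k" "blinfun_apply c (-z) \<le> k" using H nz by auto
        then have "\<bar>blinfun_apply c z\<bar> \<le> k" by (auto simp: blinfun.minus_right)
        moreover have "blinfun_apply c z = blinfun_apply c y / norm y"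
          by (simp add: z_def blinfun.scaleR_right)
        ultimately have "\<bar>blinfun_apply c y\<bar> / norm y \<le> k" using False by simp
        then show ?thesis using False by (simp add: field_simps)
      qed simp
    qed (use k0 in simp)
    then show False using c1 k0 by simp
  qed
  then obtain Y where Y: "\<And>n. norm (Y n) \<le> 1" "\<And>n. blinfun_apply c (Y n) > 1 - inverse (real (Suc n))"
    by metis
  have Yle: "blinfun_apply c z \<le> norm z" for z using blinfun_le_norm[of c z] c1 by simp
  have "Cauchy Y"
    unfolding Cauchy_def
  proof (intro allI impI)
    fix e :: real assume e: "e > 0"
    obtain d where d: "d > 0" and D: "\<forall>x y::'a. norm x \<le> 1 \<longrightarrow> norm y \<le> 1 \<longrightarrow> norm ((x + y) /\<^sub>R 2) > 1 - d \<longrightarrow> norm (x - y) < e"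
      using uc_mid[OF uc e] by blast
    obtain M where M: "inverse (real (Suc M)) < d" using reals_Archimedean[OF d] by blast
    show "\<exists>M. \<forall>m\<ge>M. \<forall>n\<ge>M. dist (Y m) (Y n) < e"
    proof (intro exI allI impI)
      fix m n assume mn: "M \<le> m" "M \<le> n"
      have im: "inverse (real (Suc m)) \<le> inverse (real (Suc M))" using mn by (simp add: field_simps)
      have iN: "inverse (real (Suc n)) \<le> inverse (real (Suc M))" using mn by (simp add: field_simps)
      have "blinfun_apply c ((Y m + Y n) /\<^sub>R 2) = (blinfun_apply c (Y m) + blinfun_apply c (Y n)) / 2"
        by (simp add: blinfun.scaleR_right blinfun.add_right)
      also have "\<dots> > 1 - d"
      proof -
        have "blinfun_apply c (Y m) + blinfun_apply c (Y n) > 2 - 2 * d"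
          using Y(2)[of m] Y(2)[of n] im iN M by linarith
        then show ?thesis by simp
      qed
      finally have "norm ((Y m + Y n) /\<^sub>R 2) > 1 - d" using Yle by (meson less_le_trans)
      then show "dist (Y m) (Y n) < e" using D Y(1) by (simp add: dist_norm)
    qed
  qed
  then obtain y where y: "Y \<longlonglongrightarrow> y" using Cauchy_convergent_iff convergent_def by blast
  have ny: "norm y \<le> 1"
    using tendsto_norm[OF y] Y(1) by (intro LIMSEQ_le_const2) auto
  have cl: "(\<lambda>n. blinfun_apply c (Y n)) \<longlonglongrightarrow> blinfun_apply c y"
    using bounded_linear.tendsto[OF blinfun.bounded_linear_right y] .
  have l1: "(\<lambda>n. 1 - inverse (real (Suc n))) \<longlonglongrightarrow> 1"
    using tendsto_diff[OF tendsto_const LIMSEQ_inverse_real_of_nat] by simp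
  have "1 \<le> blinfun_apply c y"
    by (rule LIMSEQ_le[OF l1 cl]) (use Y(2) less_imp_le in blast)
  moreover have "blinfun_apply c y \<le> norm y" by (rule Yle)
  ultimately show ?thesis using ny by (intro exI[of _ y]) auto
qed

lemma dm_surj:
  assumes uc: "uniformly_convex_space TYPE('a::banach)"
    and us: "uniformly_smooth_space TYPE('a)"
  shows "\<exists>x::'a. duality_map x = c"
proof (cases "c = 0")
  case True then show ?thesis using dm_zero[OF us] by blast
next
  case False
  define c' where "c' = (1 / norm c) *\<^sub>R c"
  have "norm c' = 1" using False by (simp add: c'_def)
  then obtain y where y: "norm y = 1" "blinfun_apply c' y = 1" using norm_attained[OF uc] by blast
  have cy: "blinfun_apply c y = norm c" using y(2) False by (simp add: c'_def blinfun.scaleR_left)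
  show ?thesis
  proof (intro exI[of _ "norm c *\<^sub>R y"] dm_intro[OF us])
    show "(norm (norm c *\<^sub>R y))\<^sup>2 \<le> blinfun_apply c (norm c *\<^sub>R y)"
      using cy y(1) by (simp add: blinfun.scaleR_right power2_eq_square)
    show "norm c \<le> norm (norm c *\<^sub>R y)" using y(1) by simp
  qed
qed

lemma dm_inj:
  assumes uc: "uniformly_convex_space TYPE('a::real_normed_vector)"
    and us: "uniformly_smooth_space TYPE('a)"
    and eq: "duality_map (x::'a) = duality_map y"
  shows "x = y"
proof (rule ccontr)
  assume ne: "x \<noteq> y"
  define r where "r = norm x"
  have ry: "norm y = r" using dm_norm[OF us, of x] dm_norm[OF us, of y] eq by (simp add: r_def)
  have r0: "r > 0" using ne ry by (cases "x = 0") (auto simp: r_def)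
  define c where "c = duality_map x"
  have 1: "blinfun_apply c (x + y) = 2 * r^2"
    using dm_self[OF us, of x] dm_self[OF us, of y] eq ry
    by (simp add: c_def blinfun.add_right r_def)
  have 2: "blinfun_apply c (x + y) \<le> r * norm (x + y)"
    using blinfun_le_norm[of c "x+y"] dm_norm[OF us, of x] by (simp add: c_def r_def)
  from 1 2 have "r * (2 * r) \<le> r * norm (x + y)" by (simp add: power2_eq_square)
  then have big: "2 * r \<le> norm (x + y)" using r0 by (simp add: power2_eq_square)
  define e where "e = norm (x - y) / r"
  have e: "e > 0" using ne r0 by (simp add: e_def)
  obtain d where d: "d > 0" and D: "\<forall>x y::'a. norm x \<le> 1 \<longrightarrow> norm y \<le> 1 \<longrightarrow> norm ((x + y) /\<^sub>R 2) > 1 - d \<longrightarrow> norm (x - y) < e"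
    using uc_mid[OF uc e] by blast
  have n1: "norm ((1/r) *\<^sub>R x) \<le> 1" "norm ((1/r) *\<^sub>R y) \<le> 1" using r0 ry by (auto simp: r_def)
  have "((1/r) *\<^sub>R x + (1/r) *\<^sub>R y) /\<^sub>R 2 = (1 / (2 * r)) *\<^sub>R (x + y)"
    by (simp add: scaleR_right_distrib)
  then have "norm (((1/r) *\<^sub>R x + (1/r) *\<^sub>R y) /\<^sub>R 2) = norm (x + y) / (2 * r)"
    using r0 by simp
  also have "\<dots> \<ge> 1" using big r0 by (simp add: field_simps)
  finally have "norm (((1/r) *\<^sub>R x + (1/r) *\<^sub>R y) /\<^sub>R 2) > 1 - d" using d by linarith
  then have "norm ((1/r) *\<^sub>R x - (1/r) *\<^sub>R y) < e" using D n1 by blast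
  moreover have "(1/r) *\<^sub>R x - (1/r) *\<^sub>R y = (1/r) *\<^sub>R (x - y)"
    by (simp add: scaleR_right_diff_distrib)
  then have "norm ((1/r) *\<^sub>R x - (1/r) *\<^sub>R y) = e"
    using r0 by (simp add: e_def)
  ultimately show False by simp
qed

lemma dm_bij:
  assumes uc: "uniformly_convex_space TYPE('a::banach)"
    and us: "uniformly_smooth_space TYPE('a)"
  shows "bij (duality_map :: 'a \<Rightarrow> _)"
  unfolding bij_def inj_def surj_def using dm_inj[OF uc us] dm_surj[OF uc us] by metis


lemma Ji_dm:
  assumes uc: "uniformly_convex_space TYPE('a::banach)" and us: "uniformly_smooth_space TYPE('a)"
  shows "inv duality_map (duality_map (x::'a)) = x"
  using dm_bij[OF uc us] by (simp add: bij_is_inj inv_f_f)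

lemma dm_Ji:
  assumes uc: "uniformly_convex_space TYPE('a::banach)" and us: "uniformly_smooth_space TYPE('a)"
  shows "duality_map (inv duality_map c :: 'a) = c"
  using dm_bij[OF uc us] by (simp add: bij_is_surj surj_f_inv_f)

lemma Ji_eqI:
  assumes uc: "uniformly_convex_space TYPE('a::banach)" and us: "uniformly_smooth_space TYPE('a)"
    and "duality_map (x::'a) = c"
  shows "inv duality_map c = x"
  using Ji_dm[OF uc us, of x] assms(3) by simp

lemma Ji_scale:
  assumes uc: "uniformly_convex_space TYPE('a::banach)" and us: "uniformly_smooth_space TYPE('a)"
  shows "(inv duality_map (r *\<^sub>R c) :: 'a) = r *\<^sub>R inv duality_map c"
  by (rule Ji_eqI[OF uc us]) (simp add: dm_scale[OF us] dm_Ji[OF uc us])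

lemma Ji_neg:
  assumes uc: "uniformly_convex_space TYPE('a::banach)" and us: "uniformly_smooth_space TYPE('a)"
  shows "(inv duality_map (- c) :: 'a) = - inv duality_map c"
  using Ji_scale[OF uc us, of "-1" c] by simp

lemma Ji_norm:
  assumes uc: "uniformly_convex_space TYPE('a::banach)" and us: "uniformly_smooth_space TYPE('a)"
  shows "norm (inv duality_map c :: 'a) = norm c"
  using dm_norm[OF us, of "inv duality_map c :: 'a"] dm_Ji[OF uc us, of c] by simp

lemma Ji_cont:
  assumes uc: "uniformly_convex_space TYPE('a::banach)" and us: "uniformly_smooth_space TYPE('a)"
  shows "continuous_on (sphere 0 1) (inv duality_map :: _ \<Rightarrow> 'a)"
  unfolding continuous_on_iff
proof (intro ballI allI impI)
  fix c and e :: real assume c: "c \<in> sphere (0::'a \<Rightarrow>\<^sub>L real) 1" and e: "e > 0"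
  obtain d where d: "d > 0" and D: "\<forall>x y::'a. norm x \<le> 1 \<longrightarrow> norm y \<le> 1 \<longrightarrow> norm ((x + y) /\<^sub>R 2) > 1 - d \<longrightarrow> norm (x - y) < e"
    using uc_mid[OF uc e] by blast
  show "\<exists>d>0. \<forall>c'\<in>sphere 0 1. dist c' c < d \<longrightarrow> dist (inv duality_map c' :: 'a) (inv duality_map c) < e"
  proof (intro exI[of _ "2 * d"] conjI ballI impI)
    fix c' assume c': "c' \<in> sphere (0::'a \<Rightarrow>\<^sub>L real) 1" and dc: "dist c' c < 2 * d"
    define x :: 'a where "x = inv duality_map c"
    define y :: 'a where "y = inv duality_map c'"
    have nc: "norm c = 1" "norm c' = 1" using c c' by auto
    have nx: "norm x = 1" "norm y = 1" using nc by (auto simp: x_def y_def Ji_norm[OF uc us])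
    have cx: "blinfun_apply c x = 1" using dm_self[OF us, of x] nx by (simp add: x_def dm_Ji[OF uc us])
    have cy': "blinfun_apply c' y = 1" using dm_self[OF us, of y] nx by (simp add: y_def dm_Ji[OF uc us])
    have "\<bar>blinfun_apply (c - c') y\<bar> \<le> norm (c - c') * norm y"
      using norm_blinfun[of "c - c'" y] by simp
    then have "blinfun_apply c y \<ge> 1 - norm (c - c')"
      using cy' nx by (simp add: blinfun.diff_left)
    moreover have "norm (c - c') < 2 * d" using dc by (simp add: dist_norm norm_minus_commute)
    ultimately have "blinfun_apply c ((x + y) /\<^sub>R 2) > 1 - d"
      using cx by (simp add: blinfun.scaleR_right blinfun.add_right)
    moreover have "blinfun_apply c ((x + y) /\<^sub>R 2) \<le> norm ((x + y) /\<^sub>R 2)"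
      using blinfun_le_norm[of c "(x + y) /\<^sub>R 2"] nc by simp
    ultimately have "norm ((x + y) /\<^sub>R 2) > 1 - d" by linarith
    then have "norm (y - x) < e" using D nx by (metis add.commute order_refl)
    then show "dist (inv duality_map c' :: 'a) (inv duality_map c) < e"
      by (simp add: x_def y_def dist_norm)
  qed (use d in simp)
qed

lemma half_sum[simp]: "(1/2) *\<^sub>R x + (1/2) *\<^sub>R x = (x::'a::real_vector)"
  by (simp flip: scaleR_add_left)

lemma uc_strict:
  assumes uc: "uniformly_convex_space TYPE('a::real_normed_vector)"
    and "norm (u::'a) \<le> r" "norm v \<le> r" "norm ((u + v) /\<^sub>R 2) \<ge> r" "r > 0"
  shows "u = v"
proof (rule ccontr)
  assume ne: "u \<noteq> v"
  define e where "e = norm (u - v) / r"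
  have e: "e > 0" using ne assms(5) by (simp add: e_def)
  obtain d where d: "d > 0" and D: "\<forall>x y::'a. norm x \<le> 1 \<longrightarrow> norm y \<le> 1 \<longrightarrow> norm ((x + y) /\<^sub>R 2) > 1 - d \<longrightarrow> norm (x - y) < e"
    using uc_mid[OF uc e] by blast
  have n1: "norm ((1/r) *\<^sub>R u) \<le> 1" "norm ((1/r) *\<^sub>R v) \<le> 1" using assms by (auto simp: field_simps)
  have "((1/r) *\<^sub>R u + (1/r) *\<^sub>R v) /\<^sub>R 2 = (1/r) *\<^sub>R ((u + v) /\<^sub>R 2)"
    by (simp add: scaleR_right_distrib ac_simps)
  then have "norm (((1/r) *\<^sub>R u + (1/r) *\<^sub>R v) /\<^sub>R 2) = norm ((u + v) /\<^sub>R 2) / r"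
    using assms(5) by (simp only: norm_scaleR) simp
  also have "\<dots> \<ge> 1" using assms by (simp add: field_simps)
  finally have "norm (((1/r) *\<^sub>R u + (1/r) *\<^sub>R v) /\<^sub>R 2) > 1 - d" using d by linarith
  then have "norm ((1/r) *\<^sub>R u - (1/r) *\<^sub>R v) < e" using D n1 by blast
  moreover have "(1/r) *\<^sub>R u - (1/r) *\<^sub>R v = (1/r) *\<^sub>R (u - v)"
    by (simp add: scaleR_right_diff_distrib)
  then have "norm ((1/r) *\<^sub>R u - (1/r) *\<^sub>R v) = e"
    using assms(5) by (simp add: e_def)
  ultimately show False by simp
qed

lemma nearest_unique:
  assumes uc: "uniformly_convex_space TYPE('a::real_normed_vector)"
    and K: "convex K" and y1: "y1 \<in> K" "\<forall>z\<in>K. dist (x::'a) y1 \<le> dist x z"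
    and y2: "y2 \<in> K" "\<forall>z\<in>K. dist x y2 \<le> dist x z"
  shows "y1 = y2"
proof -
  define r where "r = dist x y1"
  have r2: "dist x y2 = r" using y1 y2 by (simp add: r_def antisym)
  show ?thesis
  proof (cases "r = 0")
    case True then show ?thesis using r2 by (simp add: r_def)
  next
    case False
    then have r: "r > 0" by (simp add: r_def)
    define m where "m = (y1 + y2) /\<^sub>R 2"
    have mK: "m \<in> K" using convexD[OF K y1(1) y2(1), of "1/2" "1/2"]
      by (simp add: m_def scaleR_right_distrib)
    have "r \<le> dist x m" using y1(2) mK by (simp add: r_def)
    moreover have "(x - y1 + (x - y2)) /\<^sub>R 2 = x - m" by (simp add: m_def algebra_simps)
    ultimately have "norm ((x - y1 + (x - y2)) /\<^sub>R 2) \<ge> r" by (simp add: dist_norm)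
    then have "x - y1 = x - y2"
      using uc_strict[OF uc, of "x - y1" r "x - y2"] r r2 by (simp add: r_def dist_norm)
    then show ?thesis by simp
  qed
qed

lemma infdist_approx:
  assumes "A \<noteq> {}" "e > 0"
  shows "\<exists>a\<in>A. dist x a < infdist x A + e"
proof (rule ccontr)
  assume "\<not> ?thesis"
  then have "\<forall>a\<in>A. infdist x A + e \<le> dist x a" by (simp add: not_less)
  then have "infdist x A + e \<le> infdist x A"
    unfolding infdist_notempty[OF assms(1)] using assms(1) by (intro cINF_greatest) auto
  then show False using assms by simp
qed

lemma nearest_exists:
  assumes uc: "uniformly_convex_space TYPE('a::banach)"
    and K: "convex K" "closed K" "K \<noteq> {}"
  shows "\<exists>y\<in>K. \<forall>z\<in>K. dist (x::'a) y \<le> dist x z"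
proof (cases "infdist x K = 0")
  case True
  then have "x \<in> K" using in_closed_iff_infdist_zero[OF K(2,3)] by simp
  then show ?thesis by (intro bexI[of _ x]) auto
next
  case False
  define d where "d = infdist x K"
  have d: "d > 0" using False infdist_nonneg[of x K] by (simp add: d_def)
  have "\<exists>z\<in>K. dist x z < d + inverse (real (Suc n))" for n
    unfolding d_def by (rule infdist_approx[OF K(3)]) simp
  then obtain Z where Z: "\<And>n. Z n \<in> K" "\<And>n. dist x (Z n) < d + inverse (real (Suc n))"
    by metis
  have dle: "d \<le> dist x z" if "z \<in> K" for z using infdist_le[OF that] by (simp add: d_def)
  have "Cauchy Z"
    unfolding Cauchy_def
  proof (intro allI impI)
    fix e :: real assume e: "e > 0"
    define e' where "e' = e / (2 * d)"
    have e': "e' > 0" using e d by (simp add: e'_def)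
    obtain \<delta> where \<delta>: "\<delta> > 0" and D: "\<forall>x y::'a. norm x \<le> 1 \<longrightarrow> norm y \<le> 1 \<longrightarrow> norm ((x + y) /\<^sub>R 2) > 1 - \<delta> \<longrightarrow> norm (x - y) < e'"
      using uc_mid[OF uc e'] by blast
    have "min d (d * \<delta>) > 0" using d \<delta> by simp
    then obtain M where M: "inverse (real (Suc M)) < min d (d * \<delta>)" using reals_Archimedean by blast
    define i where "i = inverse (real (Suc M))"
    have i: "i > 0" "i < d" "i < d * \<delta>" using M by (auto simp: i_def)
    define R where "R = d + i"
    have R: "R > 0" "R \<le> 2 * d" using d i by (auto simp: R_def)
    show "\<exists>M. \<forall>m\<ge>M. \<forall>n\<ge>M. dist (Z m) (Z n) < e"
    proof (intro exI[of _ M] allI impI)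
      fix m n assume mn: "M \<le> m" "M \<le> n"
      have im: "inverse (real (Suc m)) \<le> i" using mn by (simp add: i_def field_simps)
      have iN: "inverse (real (Suc n)) \<le> i" using mn by (simp add: i_def field_simps)
      have dm: "norm (x - Z m) \<le> R" using Z(2)[of m] im by (simp add: R_def dist_norm)
      have dn: "norm (x - Z n) \<le> R" using Z(2)[of n] iN by (simp add: R_def dist_norm)
      define p where "p = (1/R) *\<^sub>R (x - Z m)"
      define q where "q = (1/R) *\<^sub>R (x - Z n)"
      have "norm p = norm (x - Z m) / R" unfolding p_def using R by (simp only: norm_scaleR) simp
      moreover have "norm q = norm (x - Z n) / R" unfolding q_def using R by (simp only: norm_scaleR) simp
      ultimately have np: "norm p \<le> 1" "norm q \<le> 1" using dm dn R by auto
      have midK: "(Z m + Z n) /\<^sub>R 2 \<in> K" using convexD[OF K(1) Z(1)[of m] Z(1)[of n], of "1/2" "1/2"]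
        by (simp add: scaleR_right_distrib)
      have pq: "p + q = (1/R) *\<^sub>R (x - Z m + (x - Z n))" by (simp add: p_def q_def scaleR_right_distrib)
      have w: "(x - Z m + (x - Z n)) /\<^sub>R 2 = x - (Z m + Z n) /\<^sub>R 2" by (simp add: algebra_simps)
      have "(p + q) /\<^sub>R 2 = (1/R) *\<^sub>R ((x - Z m + (x - Z n)) /\<^sub>R 2)"
        unfolding pq by (simp add: ac_simps)
      then have "(p + q) /\<^sub>R 2 = (1/R) *\<^sub>R (x - (Z m + Z n) /\<^sub>R 2)" unfolding w .
      then have "norm ((p + q) /\<^sub>R 2) = norm (x - (Z m + Z n) /\<^sub>R 2) / R"
        using R by (simp only: norm_scaleR) simp
      also have "\<dots> \<ge> d / R" using dle[OF midK] R by (simp add: dist_norm divide_right_mono)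
      finally have "norm ((p + q) /\<^sub>R 2) \<ge> d / R" .
      moreover have "d / R > 1 - \<delta>"
      proof (cases "\<delta> \<le> 1")
        case True
        have "R * (1 - \<delta>) = d - d * \<delta> + i * (1 - \<delta>)" by (simp add: R_def algebra_simps)
        also have "i * (1 - \<delta>) \<le> i" using i True \<delta> by (simp add: algebra_simps)
        finally have "R * (1 - \<delta>) < d" using i by linarith
        then show ?thesis using R by (simp add: field_simps)
      next
        case False
        then have "1 - \<delta> < 0" by simp
        moreover have "d / R > 0" using d R by simp
        ultimately show ?thesis by linarith
      qed
      ultimately have "norm ((p + q) /\<^sub>R 2) > 1 - \<delta>" by linarith
      then have "norm (p - q) < e'" using D np by blast
      moreover have "p - q = (1/R) *\<^sub>R (Z n - Z m)" by (simp add: p_def q_def algebra_simps)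
      ultimately have "norm (Z n - Z m) / R < e'" using R by simp
      then have "norm (Z n - Z m) < e' * R" using R by (simp add: field_simps)
      also have "\<dots> \<le> e' * (2 * d)" using R e' by simp
      also have "\<dots> = e" using d by (simp add: e'_def)
      finally show "dist (Z m) (Z n) < e" by (simp add: dist_norm norm_minus_commute)
    qed
  qed
  then obtain y where y: "Z \<longlonglongrightarrow> y" using Cauchy_convergent_iff convergent_def by blast
  have yK: "y \<in> K" using closed_sequentially[OF K(2) _ y] Z(1) by blast
  have l1: "(\<lambda>n. d + inverse (real (Suc n))) \<longlonglongrightarrow> d"
    using tendsto_add[OF tendsto_const LIMSEQ_inverse_real_of_nat] by simp
  have "dist x y \<le> d"
    by (rule LIMSEQ_le[OF tendsto_dist[OF tendsto_const y] l1]) (use Z(2) less_imp_le in blast)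
  then show ?thesis using yK dle by (meson order_trans)
qed

lemma metric_proj_eq:
  assumes uc: "uniformly_convex_space TYPE('a::banach)"
    and K: "convex K" "closed K" "K \<noteq> {}"
  shows "metric_proj K (x::'a) = y \<longleftrightarrow> y \<in> K \<and> (\<forall>z\<in>K. dist x y \<le> dist x z)"
proof -
  obtain y0 where y0: "y0 \<in> K \<and> (\<forall>z\<in>K. dist x y0 \<le> dist x z)" using nearest_exists[OF uc K] by blast
  have uq: "\<And>y. y \<in> K \<and> (\<forall>z\<in>K. dist x y \<le> dist x z) \<Longrightarrow> y = y0"
    using nearest_unique[OF uc K(1)] y0 by blast
  have "metric_proj K x = y0" unfolding metric_proj_def by (rule the_equality[where P="\<lambda>y. y \<in> K \<and> (\<forall>z\<in>K. dist x y \<le> dist x z)", OF y0 uq])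
  then show ?thesis using y0 uq by blast
qed

lemma polar_cone_char:
  assumes uc: "uniformly_convex_space TYPE('a::banach)"
    and K: "convex K" "closed K" "0 \<in> K"
  shows "polar_cone K = {x::'a. \<forall>z\<in>K. norm x \<le> norm (x - z)}"
proof -
  have ne: "K \<noteq> {}" using K by auto
  have "x \<in> polar_cone K \<longleftrightarrow> (\<forall>z\<in>K. norm x \<le> norm (x - z))" for x :: 'a
  proof -
    have "x \<in> polar_cone K \<longleftrightarrow> metric_proj K x = 0" by (simp add: polar_cone_def)
    also have "\<dots> \<longleftrightarrow> (0 \<in> K \<and> (\<forall>z\<in>K. dist x 0 \<le> dist x z))" by (rule metric_proj_eq[OF uc K(1,2) ne])
    also have "\<dots> \<longleftrightarrow> (\<forall>z\<in>K. norm x \<le> norm (x - z))" using K(3) by (simp add: dist_norm)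
    finally show ?thesis .
  qed
  then show ?thesis by blast
qed

lemma variational:
  assumes us: "uniformly_smooth_space TYPE('a::real_normed_vector)"
    and cone: "\<And>z t. z \<in> K \<Longrightarrow> t > 0 \<Longrightarrow> t *\<^sub>R z \<in> K"
  shows "(\<forall>z\<in>K. norm (x::'a) \<le> norm (x - z)) \<longleftrightarrow> (\<forall>z\<in>K. blinfun_apply (duality_map x) z \<le> 0)"
proof
  assume H: "\<forall>z\<in>K. norm x \<le> norm (x - z)"
  show "\<forall>z\<in>K. blinfun_apply (duality_map x) z \<le> 0"
  proof
    fix z assume z: "z \<in> K"
    have "0 \<le> gd x (-z)"
    proof (rule gd_greatest)
      fix t :: real assume t: "t > 0"
      have "norm x \<le> norm (x - t *\<^sub>R z)" using H cone[OF z t] by blast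
      then show "0 \<le> dq x (-z) t" using t by (simp add: dq_def)
    qed
    then have "0 \<le> blinfun_apply (duality_map x) (-z)" by (simp add: dm_apply[OF us])
    then show "blinfun_apply (duality_map x) z \<le> 0" by (simp add: blinfun.minus_right)
  qed
next
  assume H: "\<forall>z\<in>K. blinfun_apply (duality_map x) z \<le> 0"
  show "\<forall>z\<in>K. norm x \<le> norm (x - z)"
  proof
    fix z assume z: "z \<in> K"
    show "norm x \<le> norm (x - z)"
    proof (cases "x = 0")
      case False
      have "(norm x)^2 \<le> blinfun_apply (duality_map x) x - blinfun_apply (duality_map x) z"
        using H z dm_self[OF us, of x] by auto
      also have "\<dots> = blinfun_apply (duality_map x) (x - z)" by (simp add: blinfun.diff_right)
      also have "\<dots> \<le> norm x * norm (x - z)"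
        using blinfun_le_norm[of "duality_map x" "x - z"] by (simp add: dm_norm[OF us])
      finally show ?thesis using False by (simp add: power2_eq_square)
    qed simp
  qed
qed


locale wsetup =
  fixes a b :: "'a::banach \<Rightarrow>\<^sub>L real"
  assumes uc: "uniformly_convex_space TYPE('a)"
    and us: "uniformly_smooth_space TYPE('a)"
    and na: "norm a = 1" and nb: "norm b = 1" and ba: "b \<noteq> a" and bma: "b \<noteq> - a"
begin

definition u :: 'a where "u = inv duality_map a"
definition v :: 'a where "v = inv duality_map b"
definition gam :: real where "gam = blinfun_apply a v"
definition gam' :: real where "gam' = blinfun_apply b u"
definition det :: real where "det = 1 - gam * gam'"

lemma dm_u: "duality_map u = a" unfolding u_def by (rule dm_Ji[OF uc us])
lemma dm_v: "duality_map v = b" unfolding v_def by (rule dm_Ji[OF uc us])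
lemma nu: "norm u = 1" unfolding u_def using Ji_norm[OF uc us] na by simp
lemma nv: "norm v = 1" unfolding v_def using Ji_norm[OF uc us] nb by simp
lemma au: "blinfun_apply a u = 1" using dm_self[OF us, of u] dm_u nu by simp
lemma bv: "blinfun_apply b v = 1" using dm_self[OF us, of v] dm_v nv by simp

lemma gam_bound: "\<bar>gam\<bar> < 1"
proof -
  have le: "\<bar>gam\<bar> \<le> 1" using norm_blinfun[of a v] na nv by (simp add: gam_def)
  have "gam \<noteq> 1"
  proof
    assume "gam = 1"
    then have "duality_map v = a" using nv na by (intro dm_intro[OF us]) (auto simp: gam_def)
    then show False using dm_v ba by simp
  qed
  moreover have "gam \<noteq> -1"
  proof
    assume "gam = -1"
    then have "duality_map (-v) = a" using nv na
      by (intro dm_intro[OF us]) (auto simp: gam_def blinfun.minus_right)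
    then show False using dm_v bma dm_neg[OF us, of v] by (metis minus_minus)
  qed
  ultimately show ?thesis using le by (auto simp: abs_if)
qed

lemma gam'_bound: "\<bar>gam'\<bar> < 1"
proof -
  have le: "\<bar>gam'\<bar> \<le> 1" using norm_blinfun[of b u] nb nu by (simp add: gam'_def)
  have "gam' \<noteq> 1"
  proof
    assume "gam' = 1"
    then have "duality_map u = b" using nu nb by (intro dm_intro[OF us]) (auto simp: gam'_def)
    then show False using dm_u ba by simp
  qed
  moreover have "gam' \<noteq> -1"
  proof
    assume "gam' = -1"
    then have "duality_map (-u) = b" using nu nb
      by (intro dm_intro[OF us]) (auto simp: gam'_def blinfun.minus_right)
    then show False using dm_u bma dm_neg[OF us, of u] by simp
  qed
  ultimately show ?thesis using le by (auto simp: abs_if)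
qed

lemma det_pos: "det > 0"
proof -
  have "\<bar>gam * gam'\<bar> < 1"
    using gam_bound gam'_bound by (simp add: abs_mult) (metis abs_ge_zero mult_le_one mult_strict_mono' abs_mult less_eq_real_def mult_1)
  then show ?thesis by (simp add: det_def)
qed

definition p :: 'a where "p = (1 / det) *\<^sub>R (u - gam' *\<^sub>R v)"
definition q :: 'a where "q = (1 / det) *\<^sub>R (v - gam *\<^sub>R u)"

lemma ap: "blinfun_apply a p = 1" and bp: "blinfun_apply b p = 0"
  and aq: "blinfun_apply a q = 0" and bq: "blinfun_apply b q = 1"
  using det_pos au bv
  by (simp_all add: p_def q_def blinfun.scaleR_right blinfun.diff_right gam_def gam'_def det_def field_simps)

lemma ab_indep: "\<alpha> *\<^sub>R a + \<beta> *\<^sub>R b = 0 \<Longrightarrow> \<alpha> = 0 \<and> \<beta> = 0"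
proof -
  assume h: "\<alpha> *\<^sub>R a + \<beta> *\<^sub>R b = 0"
  have "blinfun_apply (\<alpha> *\<^sub>R a + \<beta> *\<^sub>R b) p = 0" "blinfun_apply (\<alpha> *\<^sub>R a + \<beta> *\<^sub>R b) q = 0"
    using h by simp_all
  then show ?thesis using ap bp aq bq by (simp add: blinfun.add_left blinfun.scaleR_left)
qed

lemma uv_coords: "blinfun_apply a (\<sigma> *\<^sub>R u + \<tau> *\<^sub>R v) = \<sigma> + \<tau> * gam"
  "blinfun_apply b (\<sigma> *\<^sub>R u + \<tau> *\<^sub>R v) = \<sigma> * gam' + \<tau>"
  using au bv by (simp_all add: blinfun.add_right blinfun.scaleR_right gam_def gam'_def)

definition sig :: "'a \<Rightarrow> real" where "sig w = (blinfun_apply a w - gam * blinfun_apply b w) / det"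
definition tau :: "'a \<Rightarrow> real" where "tau w = (blinfun_apply b w - gam' * blinfun_apply a w) / det"

lemma sig_tau: "sig (\<sigma> *\<^sub>R u + \<tau> *\<^sub>R v) = \<sigma>" "tau (\<sigma> *\<^sub>R u + \<tau> *\<^sub>R v) = \<tau>"
  using det_pos by (simp_all add: sig_def tau_def uv_coords det_def field_simps)

lemma uv_indep: assumes h: "\<sigma> *\<^sub>R u + \<tau> *\<^sub>R v = 0" shows "\<sigma> = 0 \<and> \<tau> = 0"
proof -
  have "\<sigma> = sig (\<sigma> *\<^sub>R u + \<tau> *\<^sub>R v)" "\<tau> = tau (\<sigma> *\<^sub>R u + \<tau> *\<^sub>R v)" by (simp_all only: sig_tau)
  then show ?thesis unfolding h by (simp add: sig_def tau_def)
qed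

lemma span_uv: "w \<in> span {u, v} \<longleftrightarrow> (\<exists>\<sigma> \<tau>. w = \<sigma> *\<^sub>R u + \<tau> *\<^sub>R v)"
proof
  assume "w \<in> span {u, v}"
  then obtain k where "w - k *\<^sub>R u \<in> span {v}" by (auto simp: span_insert)
  then obtain k' where "w - k *\<^sub>R u = k' *\<^sub>R v" by (auto simp: span_singleton)
  then have "w = k *\<^sub>R u + k' *\<^sub>R v" by (simp add: algebra_simps)
  then show "\<exists>\<sigma> \<tau>. w = \<sigma> *\<^sub>R u + \<tau> *\<^sub>R v" by blast
next
  assume "\<exists>\<sigma> \<tau>. w = \<sigma> *\<^sub>R u + \<tau> *\<^sub>R v"
  then obtain \<sigma> \<tau> where w: "w = \<sigma> *\<^sub>R u + \<tau> *\<^sub>R v" by blast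
  show "w \<in> span {u, v}" unfolding w by (intro span_add span_scale span_base) auto
qed

lemma span_uv_coords: "w \<in> span {u, v} \<Longrightarrow> w = sig w *\<^sub>R u + tau w *\<^sub>R v"
  using span_uv sig_tau by metis

lemma u_ne_v: "u \<noteq> v"
proof
  assume "u = v"
  then have "1 *\<^sub>R u + (-1) *\<^sub>R v = 0" by simp
  from uv_indep[OF this] show False by simp
qed

lemma indep_uv: "independent {u, v}"
proof -
  have v0: "v \<noteq> 0" using nv by auto
  have uv: "u \<noteq> v" by (rule u_ne_v)
  have "u \<notin> span {v}"
  proof
    assume "u \<in> span {v}"
    then obtain k where "u = k *\<^sub>R v" by (auto simp: span_singleton)
    then have "1 *\<^sub>R u + (-k) *\<^sub>R v = 0" by simp
    from uv_indep[OF this] show False by simp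
  qed
  moreover have "independent {v}" using v0 by (simp add: independent_insert)
  ultimately show ?thesis using uv by (simp add: independent_insert)
qed

lemma card_uv: "card {u, v} = 2"
  using u_ne_v by simp

lemma dim_span_uv: "dim (span {u, v}) = 2"
  using indep_uv card_uv by (simp add: dim_eq_card_independent)

end


context wsetup begin

definition Kc :: "('a \<Rightarrow>\<^sub>L real) set" where "Kc = {l *\<^sub>R a + m *\<^sub>R b | l m. l \<ge> 0 \<and> m \<ge> 0}"

lemma Kc_I: "l \<ge> 0 \<Longrightarrow> m \<ge> 0 \<Longrightarrow> l *\<^sub>R a + m *\<^sub>R b \<in> Kc"
  unfolding Kc_def by blast

lemma a_in_delta: "a \<in> delta_arc a b"
  unfolding delta_arc_def using na by (intro CollectI exI[of _ 1] exI[of _ 0]) simp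

lemma b_in_delta: "b \<in> delta_arc a b"
  unfolding delta_arc_def using nb by (intro CollectI exI[of _ 0] exI[of _ 1]) simp

lemma wedge_eq: "wedge a b = {z. blinfun_apply a z \<le> 0 \<and> blinfun_apply b z \<le> 0}"
proof
  show "wedge a b \<subseteq> {z. blinfun_apply a z \<le> 0 \<and> blinfun_apply b z \<le> 0}"
    using a_in_delta b_in_delta unfolding wedge_def by blast
  show "{z. blinfun_apply a z \<le> 0 \<and> blinfun_apply b z \<le> 0} \<subseteq> wedge a b"
  proof
    fix z assume z: "z \<in> {z. blinfun_apply a z \<le> 0 \<and> blinfun_apply b z \<le> 0}"
    show "z \<in> wedge a b" unfolding wedge_def
    proof (intro CollectI ballI)
      fix c assume "c \<in> delta_arc a b"
      then obtain l m where c: "c = (1 / norm (l *\<^sub>R a + m *\<^sub>R b)) *\<^sub>R (l *\<^sub>R a + m *\<^sub>R b)"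
        and lm: "l \<ge> 0" "m \<ge> 0" unfolding delta_arc_def by blast
      have "l * blinfun_apply a z + m * blinfun_apply b z \<le> 0"
        using z lm by (simp add: add_nonpos_nonpos mult_nonneg_nonpos)
      moreover have "blinfun_apply c z = (1 / norm (l *\<^sub>R a + m *\<^sub>R b)) * (l * blinfun_apply a z + m * blinfun_apply b z)"
        by (simp add: c blinfun.scaleR_left blinfun.add_left)
      ultimately show "blinfun_apply c z \<le> 0" by (simp add: divide_nonpos_nonneg)
    qed
  qed
qed

lemma W_closed: "closed (wedge a b)"
proof -
  have "closed {z. blinfun_apply a z \<le> 0}" "closed {z. blinfun_apply b z \<le> 0}"
    by (intro closed_Collect_le linear_continuous_on blinfun.bounded_linear_right continuous_on_const)+
  then have "closed ({z. blinfun_apply a z \<le> 0} \<inter> {z. blinfun_apply b z \<le> 0})" by blast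
  then show ?thesis unfolding wedge_eq by (simp add: Collect_conj_eq)
qed

lemma W_convex: "convex (wedge a b)"
  unfolding wedge_eq convex_def
  by (auto simp: blinfun.add_right blinfun.scaleR_right add_nonpos_nonpos mult_nonneg_nonpos)

lemma W_zero: "0 \<in> wedge a b" unfolding wedge_eq by simp

lemma W_cone: "z \<in> wedge a b \<Longrightarrow> t > 0 \<Longrightarrow> t *\<^sub>R z \<in> wedge a b"
  unfolding wedge_eq by (auto simp: blinfun.scaleR_right mult_nonneg_nonpos)

lemma farkas: "(\<forall>z. blinfun_apply a z \<le> 0 \<and> blinfun_apply b z \<le> 0 \<longrightarrow> blinfun_apply c z \<le> 0) \<longleftrightarrow> c \<in> Kc"
proof
  assume H: "\<forall>z. blinfun_apply a z \<le> 0 \<and> blinfun_apply b z \<le> 0 \<longrightarrow> blinfun_apply c z \<le> 0"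
  have eq: "blinfun_apply c z = blinfun_apply c p * blinfun_apply a z + blinfun_apply c q * blinfun_apply b z" for z
  proof -
    define z' where "z' = z - blinfun_apply a z *\<^sub>R p - blinfun_apply b z *\<^sub>R q"
    have az: "blinfun_apply a z' = 0" "blinfun_apply b z' = 0"
      using ap bp aq bq by (simp_all add: z'_def blinfun.diff_right blinfun.scaleR_right)
    have "blinfun_apply c z' \<le> 0" using H az by simp
    moreover have "blinfun_apply c (-z') \<le> 0" using H[rule_format, of "-z'"] az by (simp add: blinfun.minus_right)
    ultimately have "blinfun_apply c z' = 0" by (simp add: blinfun.minus_right)
    moreover have "blinfun_apply c z' = blinfun_apply c z - blinfun_apply a z * blinfun_apply c p - blinfun_apply b z * blinfun_apply c q"
      by (simp add: z'_def blinfun.diff_right blinfun.scaleR_right)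
    ultimately show ?thesis by (simp add: algebra_simps)
  qed
  have "c = blinfun_apply c p *\<^sub>R a + blinfun_apply c q *\<^sub>R b"
  proof (rule blinfun_eqI)
    fix i
    show "blinfun_apply c i = blinfun_apply (blinfun_apply c p *\<^sub>R a + blinfun_apply c q *\<^sub>R b) i"
      by (subst eq) (simp add: blinfun.add_left blinfun.scaleR_left)
  qed
  moreover have "blinfun_apply c (-p) \<le> 0" using H[rule_format, of "-p"] ap bp by (simp add: blinfun.minus_right)
  moreover have "blinfun_apply c (-q) \<le> 0" using H[rule_format, of "-q"] aq bq by (simp add: blinfun.minus_right)
  ultimately show "c \<in> Kc" by (metis Kc_I blinfun.minus_right neg_le_0_iff_le)
next
  assume "c \<in> Kc"
  then obtain l m where c: "c = l *\<^sub>R a + m *\<^sub>R b" "l \<ge> 0" "m \<ge> 0" unfolding Kc_def by blast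
  show "\<forall>z. blinfun_apply a z \<le> 0 \<and> blinfun_apply b z \<le> 0 \<longrightarrow> blinfun_apply c z \<le> 0"
    using c by (auto simp: blinfun.add_left blinfun.scaleR_left add_nonpos_nonpos mult_nonneg_nonpos)
qed

lemma polar_eq: "polar_cone (wedge a b) = {x. duality_map x \<in> Kc}"
proof -
  have "polar_cone (wedge a b) = {x. \<forall>z\<in>wedge a b. norm x \<le> norm (x - z)}"
    by (rule polar_cone_char[OF uc W_convex W_closed W_zero])
  also have "\<dots> = {x. \<forall>z\<in>wedge a b. blinfun_apply (duality_map x) z \<le> 0}"
    using variational[OF us W_cone] by blast
  also have "\<dots> = {x. duality_map x \<in> Kc}"
    unfolding farkas[symmetric] wedge_eq by blast
  finally show ?thesis .
qed

lemma ab_coeff_eq: "\<alpha> *\<^sub>R a + \<beta> *\<^sub>R b = \<alpha>' *\<^sub>R a + \<beta>' *\<^sub>R b \<Longrightarrow> \<alpha> = \<alpha>' \<and> \<beta> = \<beta>'"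
proof -
  assume "\<alpha> *\<^sub>R a + \<beta> *\<^sub>R b = \<alpha>' *\<^sub>R a + \<beta>' *\<^sub>R b"
  then have "(\<alpha> - \<alpha>') *\<^sub>R a + (\<beta> - \<beta>') *\<^sub>R b = 0" by (simp add: algebra_simps)
  from ab_indep[OF this] show ?thesis by simp
qed

lemma comb_nz: "(l, m) \<noteq> (0, 0) \<Longrightarrow> l *\<^sub>R a + m *\<^sub>R b \<noteq> 0"
  using ab_indep by auto

definition cc :: "real \<Rightarrow> ('a \<Rightarrow>\<^sub>L real)" where
  "cc t = (1 / norm ((1 - t) *\<^sub>R a + t *\<^sub>R b)) *\<^sub>R ((1 - t) *\<^sub>R a + t *\<^sub>R b)"

lemma cc_den: "(1 - t) *\<^sub>R a + t *\<^sub>R b \<noteq> 0"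
  by (rule comb_nz) auto

lemma cc_den_pos: "norm ((1 - t) *\<^sub>R a + t *\<^sub>R b) > 0"
  using cc_den by simp

lemma normalize_scale: "k > 0 \<Longrightarrow> (1 / norm (k *\<^sub>R w)) *\<^sub>R (k *\<^sub>R w) = (1 / norm w) *\<^sub>R (w::'b::real_normed_vector)"
  by simp

lemma cc_coeffs: "cc t = ((1 - t) / norm ((1 - t) *\<^sub>R a + t *\<^sub>R b)) *\<^sub>R a + (t / norm ((1 - t) *\<^sub>R a + t *\<^sub>R b)) *\<^sub>R b"
  by (simp add: cc_def scaleR_right_distrib)

lemma delta_eq: "delta_arc a b = cc ` {0..1}"
proof
  show "delta_arc a b \<subseteq> cc ` {0..1}"
  proof
    fix c assume "c \<in> delta_arc a b"
    then obtain l m where c: "c = (1 / norm (l *\<^sub>R a + m *\<^sub>R b)) *\<^sub>R (l *\<^sub>R a + m *\<^sub>R b)"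
      and lm: "l \<ge> 0" "m \<ge> 0" "(l, m) \<noteq> (0, 0)" unfolding delta_arc_def by blast
    define s where "s = l + m"
    have s: "s > 0" using lm by (auto simp: s_def)
    define t where "t = m / s"
    have t: "t \<in> {0..1}" using lm s by (auto simp: t_def s_def field_simps)
    have "(1 - t) *\<^sub>R a + t *\<^sub>R b = (1 / s) *\<^sub>R (l *\<^sub>R a + m *\<^sub>R b)"
      using s by (simp add: t_def s_def field_simps scaleR_right_distrib)
    then have "cc t = c"
      unfolding cc_def c using s by (simp only: normalize_scale) (rule normalize_scale, simp)
    then show "c \<in> cc ` {0..1}" using t by blast
  qed
  show "cc ` {0..1} \<subseteq> delta_arc a b"
  proof
    fix c assume "c \<in> cc ` {0..1}"
    then obtain t where t: "t \<in> {0..1}" "c = cc t" by blast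
    show "c \<in> delta_arc a b" unfolding delta_arc_def t(2) cc_def
      using t(1) by (intro CollectI exI[of _ "1 - t"] exI[of _ t]) auto
  qed
qed

lemma cc_norm: "norm (cc t) = 1"
  using cc_den_pos[of t] by (simp add: cc_def)

lemma cc_K: "t \<in> {0..1} \<Longrightarrow> cc t \<in> Kc"
  unfolding cc_coeffs using cc_den_pos[of t] by (intro Kc_I) auto

lemma cc_0: "cc 0 = a" using na by (simp add: cc_def)
lemma cc_1: "cc 1 = b" using nb by (simp add: cc_def)

lemma cc_cont: "continuous_on {0..1} cc"
  unfolding cc_def using cc_den_pos by (intro continuous_intros) auto

lemma cc_inj: "inj_on cc {0..1}"
proof (rule inj_onI)
  fix s t assume st: "s \<in> {0..1}" "t \<in> {0..1}" "cc s = cc t"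
  define Ns where "Ns = norm ((1 - s) *\<^sub>R a + s *\<^sub>R b)"
  define Nt where "Nt = norm ((1 - t) *\<^sub>R a + t *\<^sub>R b)"
  have N: "Ns > 0" "Nt > 0" using cc_den_pos by (auto simp: Ns_def Nt_def)
  have "((1 - s) / Ns) *\<^sub>R a + (s / Ns) *\<^sub>R b = ((1 - t) / Nt) *\<^sub>R a + (t / Nt) *\<^sub>R b"
    using st(3) unfolding cc_coeffs Ns_def Nt_def .
  from ab_coeff_eq[OF this] have e: "(1 - s) / Ns = (1 - t) / Nt" "s / Ns = t / Nt" by auto
  then have "(1 - s) / Ns + s / Ns = (1 - t) / Nt + t / Nt" by simp
  then have "1 / Ns = 1 / Nt" by (simp add: add_divide_distrib[symmetric])
  then have "Ns = Nt" by simp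
  then show "s = t" using e(2) N by simp
qed

lemma cc_ne_neg: "t \<in> {0..1} \<Longrightarrow> cc t \<noteq> - a \<and> cc t \<noteq> - b"
proof -
  assume t: "t \<in> {0..1}"
  define N where "N = norm ((1 - t) *\<^sub>R a + t *\<^sub>R b)"
  have N: "N > 0" using cc_den_pos by (simp add: N_def)
  have c: "cc t = ((1 - t) / N) *\<^sub>R a + (t / N) *\<^sub>R b" unfolding cc_coeffs N_def ..
  have "cc t \<noteq> (-1) *\<^sub>R a + 0 *\<^sub>R b"
  proof
    assume "cc t = (-1) *\<^sub>R a + 0 *\<^sub>R b"
    from ab_coeff_eq[OF this[unfolded c]] have "(1 - t) / N = -1" by simp
    moreover have "(1 - t) / N \<ge> 0" using t N by simp
    ultimately show False by simp
  qed
  moreover have "cc t \<noteq> 0 *\<^sub>R a + (-1) *\<^sub>R b"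
  proof
    assume "cc t = 0 *\<^sub>R a + (-1) *\<^sub>R b"
    from ab_coeff_eq[OF this[unfolded c]] have "t / N = -1" by simp
    moreover have "t / N \<ge> 0" using t N by simp
    ultimately show False by simp
  qed
  ultimately show ?thesis by simp
qed

definition ww :: "real \<Rightarrow> 'a" where "ww t = inv duality_map (cc t)"

lemma dm_ww: "duality_map (ww t) = cc t" unfolding ww_def by (rule dm_Ji[OF uc us])
lemma ww_norm: "norm (ww t) = 1" unfolding ww_def using Ji_norm[OF uc us] cc_norm by simp
lemma ww_0: "ww 0 = u" unfolding ww_def u_def cc_0 ..
lemma ww_1: "ww 1 = v" unfolding ww_def v_def cc_1 ..

lemma ww_cont: "continuous_on {0..1} ww"
  unfolding ww_def
  by (rule continuous_on_compose2[OF Ji_cont[OF uc us] cc_cont]) (auto simp: cc_norm)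

lemma ww_inj: "inj_on ww {0..1}"
  using cc_inj dm_ww by (metis inj_on_def)

lemma ww_ne_neg: "t \<in> {0..1} \<Longrightarrow> ww t \<noteq> - u \<and> ww t \<noteq> - v"
  using cc_ne_neg dm_ww dm_neg[OF us] dm_u dm_v by metis

lemma P_char: "{x. duality_map x \<in> Kc} = {r *\<^sub>R ww t | r t. r \<ge> 0 \<and> t \<in> {0..1}}"
proof
  show "{x. duality_map x \<in> Kc} \<subseteq> {r *\<^sub>R ww t | r t. r \<ge> 0 \<and> t \<in> {0..1}}"
  proof
    fix x assume "x \<in> {x. duality_map x \<in> Kc}"
    then obtain l m where lm: "duality_map x = l *\<^sub>R a + m *\<^sub>R b" "l \<ge> 0" "m \<ge> 0"
      unfolding Kc_def by blast
    show "x \<in> {r *\<^sub>R ww t | r t. r \<ge> 0 \<and> t \<in> {0..1}}"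
    proof (cases "x = 0")
      case True then show ?thesis by (intro CollectI exI[of _ 0] exI[of _ 0]) auto
    next
      case False
      have nd: "norm (duality_map x) = norm x" by (rule dm_norm[OF us])
      then have "(l, m) \<noteq> (0, 0)" using False lm(1) by auto
      then have "(1 / norm (l *\<^sub>R a + m *\<^sub>R b)) *\<^sub>R (l *\<^sub>R a + m *\<^sub>R b) \<in> delta_arc a b"
        unfolding delta_arc_def using lm by blast
      then obtain t where t: "t \<in> {0..1}" "cc t = (1 / norm x) *\<^sub>R duality_map x"
        unfolding delta_eq using lm(1) nd by auto
      have "duality_map x = norm x *\<^sub>R cc t" using t False by simp
      then have "x = inv duality_map (norm x *\<^sub>R cc t)" using Ji_dm[OF uc us, of x] by simp
      also have "\<dots> = norm x *\<^sub>R ww t" by (simp add: Ji_scale[OF uc us] ww_def)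
      finally have xe: "x = norm x *\<^sub>R ww t" .
      show ?thesis by (intro CollectI exI[of _ "norm x"] exI[of _ t] conjI xe) (use t in auto)
    qed
  qed
  show "{r *\<^sub>R ww t | r t. r \<ge> 0 \<and> t \<in> {0..1}} \<subseteq> {x. duality_map x \<in> Kc}"
  proof clarify
    fix r t :: real assume rt: "r \<ge> 0" "t \<in> {0..1}"
    obtain l m where "cc t = l *\<^sub>R a + m *\<^sub>R b" "l \<ge> 0" "m \<ge> 0" using cc_K[OF rt(2)] unfolding Kc_def by blast
    then show "duality_map (r *\<^sub>R ww t) \<in> Kc"
      unfolding Kc_def using rt by (intro CollectI exI[of _ "r * l"] exI[of _ "r * m"])
        (simp add: dm_scale[OF us] dm_ww scaleR_right_distrib)
  qed
qed

lemma Ji_delta: "inv duality_map ` delta_arc a b = ww ` {0..1}"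
  unfolding delta_eq image_image ww_def ..

end


context wsetup begin

lemma a_in_Kc: "a \<in> Kc" using Kc_I[of 1 0] by simp
lemma b_in_Kc: "b \<in> Kc" using Kc_I[of 0 1] by simp

lemma uv_span: "\<sigma> *\<^sub>R u + \<tau> *\<^sub>R v \<in> span {u, v}"
  using span_uv by blast

lemma conv_dir:
  assumes cv: "convex {x. duality_map x \<in> Kc}"
  shows "\<forall>t\<in>{0..1}. ww t \<in> span {u, v}"
proof
  fix t :: real assume t: "t \<in> {0..1}"
  let ?P = "{x. duality_map x \<in> Kc}"
  have uP: "u \<in> ?P" using dm_u a_in_Kc by simp
  have vP: "v \<in> ?P" using dm_v b_in_Kc by simp
  define xs where "xs s = (1 - s) *\<^sub>R u + s *\<^sub>R v" for s :: real
  have xsP: "xs s \<in> ?P" if "s \<in> {0..1}" for s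
    unfolding xs_def using that by (intro convexD[OF cv uP vP]) auto
  have xs_nz: "xs s \<noteq> 0" for s
  proof
    assume "xs s = 0"
    from uv_indep[OF this[unfolded xs_def]] show False by linarith
  qed
  define nx where "nx s = (1 / norm (xs s)) *\<^sub>R xs s" for s
  have nx_in: "nx s \<in> ww ` {0..1}" if s: "s \<in> {0..1}" for s
  proof -
    have "xs s \<in> {r *\<^sub>R ww t | r t. r \<ge> 0 \<and> t \<in> {0..1}}" using xsP[OF s] P_char by blast
    then obtain r t' where rt: "xs s = r *\<^sub>R ww t'" "r \<ge> 0" "t' \<in> {0..1}" by blast
    have "norm (xs s) = r" using rt ww_norm by simp
    then have "r > 0" using xs_nz[of s] rt(2) by auto
    then have "nx s = ww t'" using rt \<open>norm (xs s) = r\<close> by (simp add: nx_def)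
    then show ?thesis using rt(3) by blast
  qed
  have nx_cont: "continuous_on {0..1} nx"
    unfolding nx_def xs_def using xs_nz unfolding xs_def by (intro continuous_intros) auto
  have nx0: "nx 0 = u" using nu by (simp add: nx_def xs_def)
  have nx1: "nx 1 = v" using nv by (simp add: nx_def xs_def)
  define winv where "winv = the_inv_into {0..1} ww"
  have winv_ww: "winv (ww s) = s" if "s \<in> {0..1}" for s
    unfolding winv_def using the_inv_into_f_f[OF ww_inj that] .
  have winv_cont: "continuous_on (ww ` {0..1}) winv"
    by (rule continuous_on_inv[OF ww_cont compact_Icc]) (use winv_ww in auto)
  define \<phi> where "\<phi> s = winv (nx s)" for s
  have \<phi>_cont: "continuous_on {0..1} \<phi>"
    unfolding \<phi>_def by (rule continuous_on_compose2[OF winv_cont nx_cont]) (use nx_in in auto)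
  have \<phi>0: "\<phi> 0 = 0" using winv_ww[of 0] by (simp add: \<phi>_def nx0 ww_0[symmetric])
  have \<phi>1: "\<phi> 1 = 1" using winv_ww[of 1] by (simp add: \<phi>_def nx1 ww_1[symmetric])
  obtain s where s: "0 \<le> s" "s \<le> 1" "\<phi> s = t"
    using IVT'[of \<phi> 0 t 1] \<phi>0 \<phi>1 t \<phi>_cont by auto
  have "ww t = nx s"
  proof -
    have "nx s \<in> ww ` {0..1}" using nx_in s by auto
    then have "ww (winv (nx s)) = nx s" unfolding winv_def by (rule f_the_inv_into_f[OF ww_inj])
    then show ?thesis using s(3) by (simp add: \<phi>_def)
  qed
  also have "nx s \<in> span {u, v}"
    unfolding nx_def xs_def by (simp add: scaleR_right_distrib uv_span)
  finally show "ww t \<in> span {u, v}" .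
qed

lemma sig_u: "sig u = 1" and tau_u: "tau u = 0" and sig_v: "sig v = 0" and tau_v: "tau v = 1"
  using sig_tau[of 1 0] sig_tau[of 0 1] by simp_all

lemma sigww_cont: "continuous_on {0..1} (\<lambda>t. sig (ww t))"
  unfolding sig_def
  by (intro continuous_intros bounded_linear.continuous_on[OF blinfun.bounded_linear_right] ww_cont)
    (use det_pos in auto)

lemma tauww_cont: "continuous_on {0..1} (\<lambda>t. tau (ww t))"
  unfolding tau_def
  by (intro continuous_intros bounded_linear.continuous_on[OF blinfun.bounded_linear_right] ww_cont)
    (use det_pos in auto)

lemma unit_mult: "norm (k *\<^sub>R w) = 1 \<Longrightarrow> norm w = 1 \<Longrightarrow> k = 1 \<or> k = -1"
  by (simp add: abs_if split: if_splits)

context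
  assumes H: "\<forall>t\<in>{0..1}. ww t \<in> span {u, v}"
begin

lemma ww_coords: "t \<in> {0..1} \<Longrightarrow> ww t = sig (ww t) *\<^sub>R u + tau (ww t) *\<^sub>R v"
  using H span_uv_coords by blast

lemma sig_nonneg: "t \<in> {0..1} \<Longrightarrow> sig (ww t) \<ge> 0"
proof (rule ccontr)
  assume t0: "t \<in> {0..1}" and neg: "\<not> sig (ww t) \<ge> 0"
  have "continuous_on {0..t} (\<lambda>t. sig (ww t))"
    using continuous_on_subset[OF sigww_cont] t0 by auto
  then obtain t1 where t1: "0 \<le> t1" "t1 \<le> t" "sig (ww t1) = 0"
    using IVT2'[of "\<lambda>t. sig (ww t)" t 0 0] neg t0 by (auto simp: ww_0 sig_u)
  have t1I: "t1 \<in> {0..1}" using t1 t0 by auto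
  have e: "ww t1 = tau (ww t1) *\<^sub>R v" using ww_coords[OF t1I] t1(3) by simp
  then have "tau (ww t1) = 1 \<or> tau (ww t1) = -1" using ww_norm[of t1] nv by (metis unit_mult)
  moreover have "ww t1 \<noteq> -v" using ww_ne_neg[OF t1I] by blast
  ultimately have "ww t1 = ww 1" using e ww_1 by auto
  then have "t1 = 1" using inj_onD[OF ww_inj] t1I by auto
  then have "t = 1" using t1 t0 by auto
  then show False using neg by (simp add: ww_1 sig_v)
qed

lemma tau_nonneg: "t \<in> {0..1} \<Longrightarrow> tau (ww t) \<ge> 0"
proof (rule ccontr)
  assume t0: "t \<in> {0..1}" and neg: "\<not> tau (ww t) \<ge> 0"
  have "continuous_on {t..1} (\<lambda>t. tau (ww t))"
    using continuous_on_subset[OF tauww_cont] t0 by auto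
  then obtain t1 where t1: "t \<le> t1" "t1 \<le> 1" "tau (ww t1) = 0"
    using IVT'[of "\<lambda>t. tau (ww t)" t 0 1] neg t0 by (auto simp: ww_1 tau_v)
  have t1I: "t1 \<in> {0..1}" using t1 t0 by auto
  have e: "ww t1 = sig (ww t1) *\<^sub>R u" using ww_coords[OF t1I] t1(3) by simp
  then have "sig (ww t1) = 1 \<or> sig (ww t1) = -1" using ww_norm[of t1] nu by (metis unit_mult)
  moreover have "ww t1 \<noteq> -u" using ww_ne_neg[OF t1I] by blast
  ultimately have "ww t1 = ww 0" using e ww_0 by auto
  then have "t1 = 0" using inj_onD[OF ww_inj] t1I by auto
  then have "t = 0" using t1 t0 by auto
  then show False using neg by (simp add: ww_0 tau_u)
qed

lemma P_eq_cone: "{x. duality_map x \<in> Kc} = {\<alpha> *\<^sub>R u + \<beta> *\<^sub>R v | \<alpha> \<beta>. \<alpha> \<ge> 0 \<and> \<beta> \<ge> 0}"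
proof
  show "{x. duality_map x \<in> Kc} \<subseteq> {\<alpha> *\<^sub>R u + \<beta> *\<^sub>R v | \<alpha> \<beta>. \<alpha> \<ge> 0 \<and> \<beta> \<ge> 0}"
  proof
    fix x assume "x \<in> {x. duality_map x \<in> Kc}"
    then obtain r t where rt: "x = r *\<^sub>R ww t" "r \<ge> 0" "t \<in> {0..1}" unfolding P_char by blast
    define S where "S = sig (ww t)"
    define T where "T = tau (ww t)"
    have wc: "ww t = S *\<^sub>R u + T *\<^sub>R v" unfolding S_def T_def by (rule ww_coords[OF rt(3)])
    have "x = (r * S) *\<^sub>R u + (r * T) *\<^sub>R v"
      unfolding rt(1) wc by (simp add: scaleR_right_distrib)
    moreover have "r * S \<ge> 0" "r * T \<ge> 0"
      using rt sig_nonneg[OF rt(3)] tau_nonneg[OF rt(3)] by (auto simp: S_def T_def)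
    ultimately show "x \<in> {\<alpha> *\<^sub>R u + \<beta> *\<^sub>R v | \<alpha> \<beta>. \<alpha> \<ge> 0 \<and> \<beta> \<ge> 0}" by blast
  qed
  show "{\<alpha> *\<^sub>R u + \<beta> *\<^sub>R v | \<alpha> \<beta>. \<alpha> \<ge> 0 \<and> \<beta> \<ge> 0} \<subseteq> {x. duality_map x \<in> Kc}"
  proof clarify
    fix \<alpha> \<beta> :: real assume ab: "\<alpha> \<ge> 0" "\<beta> \<ge> 0"
    define h where "h t = \<beta> * sig (ww t) - \<alpha> * tau (ww t)" for t
    have hc: "continuous_on {0..1} h" unfolding h_def
      by (intro continuous_intros sigww_cont tauww_cont)
    obtain t where t: "0 \<le> t" "t \<le> 1" "h t = 0"
      using IVT2'[of h 1 0 0] hc ab by (auto simp: h_def ww_0 ww_1 sig_u sig_v tau_u tau_v)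
    have tI: "t \<in> {0..1}" using t by auto
    define \<sigma> where "\<sigma> = sig (ww t)"
    define \<tau> where "\<tau> = tau (ww t)"
    have st: "\<sigma> \<ge> 0" "\<tau> \<ge> 0" using sig_nonneg[OF tI] tau_nonneg[OF tI] by (auto simp: \<sigma>_def \<tau>_def)
    have wc: "ww t = \<sigma> *\<^sub>R u + \<tau> *\<^sub>R v" using ww_coords[OF tI] by (simp add: \<sigma>_def \<tau>_def)
    have "\<sigma> + \<tau> \<noteq> 0"
    proof
      assume "\<sigma> + \<tau> = 0"
      then have "\<sigma> = 0" "\<tau> = 0" using st by linarith+
      then have "ww t = 0" using wc by simp
      then show False using ww_norm[of t] by simp
    qed
    then have spos: "\<sigma> + \<tau> > 0" using st by simp
    have bal: "\<beta> * \<sigma> = \<alpha> * \<tau>" using t(3) by (simp add: h_def \<sigma>_def \<tau>_def)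
    define k where "k = (\<alpha> + \<beta>) / (\<sigma> + \<tau>)"
    have k: "k \<ge> 0" using ab spos by (simp add: k_def)
    have "k * \<sigma> = \<alpha>" using spos bal by (simp add: k_def field_simps algebra_simps)
    moreover have "k * \<tau> = \<beta>" using spos bal by (simp add: k_def field_simps algebra_simps)
    ultimately have "\<alpha> *\<^sub>R u + \<beta> *\<^sub>R v = k *\<^sub>R ww t" by (simp add: wc scaleR_right_distrib)
    then have "\<alpha> *\<^sub>R u + \<beta> *\<^sub>R v \<in> {r *\<^sub>R ww t | r t. r \<ge> 0 \<and> t \<in> {0..1}}" using k tI by blast
    then show "duality_map (\<alpha> *\<^sub>R u + \<beta> *\<^sub>R v) \<in> Kc" unfolding P_char[symmetric] by simp
  qed
qed

lemma span_dir: "convex {x. duality_map x \<in> Kc}"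
  unfolding P_eq_cone convex_def
proof (clarify)
  fix s t \<alpha>1 \<beta>1 \<alpha>2 \<beta>2 :: real
  assume h: "0 \<le> s" "0 \<le> t" "s + t = 1" "0 \<le> \<alpha>1" "0 \<le> \<beta>1" "0 \<le> \<alpha>2" "0 \<le> \<beta>2"
  have "s *\<^sub>R (\<alpha>1 *\<^sub>R u + \<beta>1 *\<^sub>R v) + t *\<^sub>R (\<alpha>2 *\<^sub>R u + \<beta>2 *\<^sub>R v) =
        (s * \<alpha>1 + t * \<alpha>2) *\<^sub>R u + (s * \<beta>1 + t * \<beta>2) *\<^sub>R v"
    by (simp add: algebra_simps)
  moreover have "s * \<alpha>1 + t * \<alpha>2 \<ge> 0" "s * \<beta>1 + t * \<beta>2 \<ge> 0" using h by auto
  ultimately show "\<exists>\<alpha> \<beta>. s *\<^sub>R (\<alpha>1 *\<^sub>R u + \<beta>1 *\<^sub>R v) + t *\<^sub>R (\<alpha>2 *\<^sub>R u + \<beta>2 *\<^sub>R v) = \<alpha> *\<^sub>R u + \<beta> *\<^sub>R v \<and> 0 \<le> \<alpha> \<and> 0 \<le> \<beta>"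
    by blast
qed

end

lemma convex_iff_span: "convex {x. duality_map x \<in> Kc} \<longleftrightarrow> (\<forall>t\<in>{0..1}. ww t \<in> span {u, v})"
  using conv_dir span_dir by blast

lemma meridian_iff: "(\<exists>M. meridian M \<and> ww ` {0..1} \<subseteq> M) \<longleftrightarrow> (\<forall>t\<in>{0..1}. ww t \<in> span {u, v})"
proof
  assume "\<exists>M. meridian M \<and> ww ` {0..1} \<subseteq> M"
  then obtain D where D: "subspace D" "dim D = 2" "ww ` {0..1} \<subseteq> D \<inter> sphere 0 1"
    unfolding meridian_def by blast
  have "ww 0 \<in> ww ` {0..1}" "ww 1 \<in> ww ` {0..1}" by simp_all
  then have "ww 0 \<in> D" "ww 1 \<in> D" using D(3) by blast+
  then have sub: "{u, v} \<subseteq> D" by (simp add: ww_0 ww_1)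
  obtain B where B: "B \<subseteq> D" "independent B" "D \<subseteq> span B" "card B = dim D"
    using basis_exists[of D] by blast
  have fB: "finite B" "card B = 2" using B(4) D(2) by (auto intro: card_ge_0_finite)
  have "D \<subseteq> span {u, v}"
  proof
    fix w assume wD: "w \<in> D"
    show "w \<in> span {u, v}"
    proof (rule ccontr)
      assume nw: "w \<notin> span {u, v}"
      then have ind: "independent (insert w {u, v})" using indep_uv by (rule independent_insertI)
      have "insert w {u, v} \<subseteq> span B" using wD sub B(3) by blast
      then have "card (insert w {u, v}) \<le> card B" using independent_span_bound[OF fB(1) ind] by blast
      moreover have "w \<notin> {u, v}" using nw span_base by blast
      then have "card (insert w {u, v}) = 3" using card_uv by simp
      ultimately show False using fB(2) by simp
    qed
  qed
  then show "\<forall>t\<in>{0..1}. ww t \<in> span {u, v}" using D(3) by blast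
next
  assume H: "\<forall>t\<in>{0..1}. ww t \<in> span {u, v}"
  have "meridian (span {u, v} \<inter> sphere 0 1)"
    unfolding meridian_def using dim_span_uv subspace_span by blast
  moreover have "ww ` {0..1} \<subseteq> span {u, v} \<inter> sphere 0 1"
  proof
    fix x assume "x \<in> ww ` {0..1}"
    then obtain t where t: "t \<in> {0..1}" "x = ww t" by blast
    have "norm x = 1" using t(2) ww_norm by simp
    then show "x \<in> span {u, v} \<inter> sphere 0 1" using H t by simp
  qed
  ultimately show "\<exists>M. meridian M \<and> ww ` {0..1} \<subseteq> M" by blast
qed

theorem wedge_main:
  "convex (polar_cone (wedge a b)) \<longleftrightarrow> (\<exists>M. meridian M \<and> inv duality_map ` delta_arc a b \<subseteq> M)"
proof -
  have "convex (polar_cone (wedge a b)) \<longleftrightarrow> (\<forall>t\<in>{0..1}. ww t \<in> span {u, v})"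
    using convex_iff_span polar_eq by simp
  also have "\<dots> \<longleftrightarrow> (\<exists>M. meridian M \<and> ww ` {0..1} \<subseteq> M)" using meridian_iff by simp
  finally show ?thesis using Ji_delta by simp
qed

lemma meridian_span:
  assumes "\<exists>M. meridian M \<and> inv duality_map ` delta_arc a b \<subseteq> M"
  shows "inv duality_map ` delta_arc a b \<subseteq> span {inv duality_map a, inv duality_map b}"
proof -
  have "\<forall>t\<in>{0..1}. ww t \<in> span {u, v}" using assms meridian_iff Ji_delta by simp
  then have "ww ` {0..1} \<subseteq> span {u, v}" by blast
  then show ?thesis using Ji_delta by (simp add: u_def v_def)
qed

end


lemma span2_iff: "w \<in> span {x, y} \<longleftrightarrow> (\<exists>\<sigma> \<tau>. w = \<sigma> *\<^sub>R x + \<tau> *\<^sub>R (y::'b::real_vector))"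
proof
  assume "w \<in> span {x, y}"
  then obtain k where "w - k *\<^sub>R x \<in> span {y}" by (auto simp: span_insert)
  then obtain k' where "w - k *\<^sub>R x = k' *\<^sub>R y" by (auto simp: span_singleton)
  then have "w = k *\<^sub>R x + k' *\<^sub>R y" by (simp add: algebra_simps)
  then show "\<exists>\<sigma> \<tau>. w = \<sigma> *\<^sub>R x + \<tau> *\<^sub>R y" by blast
next
  assume "\<exists>\<sigma> \<tau>. w = \<sigma> *\<^sub>R x + \<tau> *\<^sub>R y"
  then obtain \<sigma> \<tau> where w: "w = \<sigma> *\<^sub>R x + \<tau> *\<^sub>R y" by blast
  show "w \<in> span {x, y}" unfolding w by (intro span_add span_scale span_base) auto
qed

lemma in_delta:
  assumes "norm c = 1" "c = l *\<^sub>R a + m *\<^sub>R b" "l \<ge> 0" "m \<ge> 0"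
  shows "c \<in> delta_arc a b"
proof -
  have "(l, m) \<noteq> (0, 0)" using assms by auto
  moreover have "c = (1 / norm (l *\<^sub>R a + m *\<^sub>R b)) *\<^sub>R (l *\<^sub>R a + m *\<^sub>R b)"
    using assms(1,2) by simp
  ultimately show ?thesis unfolding delta_arc_def using assms(3,4) by blast
qed

lemma wsetupI:
  assumes "uniformly_convex_space TYPE('a::banach)" "uniformly_smooth_space TYPE('a)"
    "norm (a::'a \<Rightarrow>\<^sub>L real) = 1" "norm b = 1" "b \<noteq> a" "b \<noteq> - a"
  shows "wsetup a b"
  using assms by unfold_locales

theorem mainTheorem6:
  assumes "uniformly_convex_space TYPE('a::banach)"
    and "uniformly_smooth_space TYPE('a)"
  shows "(\<forall>a b::'a \<Rightarrow>\<^sub>L real. norm a = 1 \<longrightarrow> norm b = 1 \<longrightarrow> b \<noteq> a \<longrightarrow> b \<noteq> - a \<longrightarrow>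
            (convex (polar_cone (wedge a b)) \<longleftrightarrow>
             (\<exists>M::'a set. meridian M \<and> inv duality_map ` delta_arc a b \<subseteq> M)))
       \<and> ((\<forall>a b::'a \<Rightarrow>\<^sub>L real. norm a = 1 \<longrightarrow> norm b = 1 \<longrightarrow> b \<noteq> a \<longrightarrow> b \<noteq> - a \<longrightarrow>
             convex (polar_cone (wedge a b)))
          \<longleftrightarrow> (\<forall>Ms::('a \<Rightarrow>\<^sub>L real) set. meridian Ms \<longrightarrow>
                 (\<exists>M::'a set. meridian M \<and> inv duality_map ` Ms \<subseteq> M)))"
proof -
  note uc = assms(1) and us = assms(2)
  have C1: "\<forall>a b::'a \<Rightarrow>\<^sub>L real. norm a = 1 \<longrightarrow> norm b = 1 \<longrightarrow> b \<noteq> a \<longrightarrow> b \<noteq> - a \<longrightarrow>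
            (convex (polar_cone (wedge a b)) \<longleftrightarrow>
             (\<exists>M::'a set. meridian M \<and> inv duality_map ` delta_arc a b \<subseteq> M))"
    using wsetup.wedge_main[OF wsetupI[OF uc us]] by blast
  have C2: "(\<forall>a b::'a \<Rightarrow>\<^sub>L real. norm a = 1 \<longrightarrow> norm b = 1 \<longrightarrow> b \<noteq> a \<longrightarrow> b \<noteq> - a \<longrightarrow>
             convex (polar_cone (wedge a b)))
          \<longleftrightarrow> (\<forall>Ms::('a \<Rightarrow>\<^sub>L real) set. meridian Ms \<longrightarrow>
                 (\<exists>M::'a set. meridian M \<and> inv duality_map ` Ms \<subseteq> M))"
  proof
    assume H: "\<forall>a b::'a \<Rightarrow>\<^sub>L real. norm a = 1 \<longrightarrow> norm b = 1 \<longrightarrow> b \<noteq> a \<longrightarrow> b \<noteq> - a \<longrightarrow>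
             convex (polar_cone (wedge a b))"
    show "\<forall>Ms::('a \<Rightarrow>\<^sub>L real) set. meridian Ms \<longrightarrow> (\<exists>M::'a set. meridian M \<and> inv duality_map ` Ms \<subseteq> M)"
    proof (intro allI impI)
      fix Ms :: "('a \<Rightarrow>\<^sub>L real) set" assume "meridian Ms"
      then obtain D where D: "subspace D" "dim D = 2" "Ms = D \<inter> sphere 0 1" unfolding meridian_def by blast
      obtain B where B: "B \<subseteq> D" "independent B" "D \<subseteq> span B" "card B = dim D"
        using basis_exists[of D] by blast
      obtain e1 e2 where e: "B = {e1, e2}" "e1 \<noteq> e2" using B(4) D(2) card_2_iff by metis
      have indB: "independent {e1, e2}" using B(2) e(1) by simp
      have e1nz: "e1 \<noteq> 0" and e2nz: "e2 \<noteq> 0" using indB dependent_zero by auto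
      have ind2: "independent (insert e2 {e1})" using indB by (metis insert_commute)
      have e2ns: "e2 \<notin> span {e1}"
        using ind2 e(2) by (simp add: independent_insert)
      define a where "a = (1 / norm e1) *\<^sub>R e1"
      define b where "b = (1 / norm e2) *\<^sub>R e2"
      have na: "norm a = 1" and nb: "norm b = 1" using e1nz e2nz by (auto simp: a_def b_def)
      have bnot: "b \<noteq> k *\<^sub>R a" for k
      proof
        assume "b = k *\<^sub>R a"
        then have h: "(1 / norm e2) *\<^sub>R e2 = (k / norm e1) *\<^sub>R e1" by (simp add: a_def b_def)
        have "e2 = norm e2 *\<^sub>R ((1 / norm e2) *\<^sub>R e2)" using e2nz by simp
        also have "\<dots> = norm e2 *\<^sub>R ((k / norm e1) *\<^sub>R e1)" using h by simp
        finally have "e2 = (norm e2 * k / norm e1) *\<^sub>R e1" by simp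
        then have "e2 \<in> span {e1}" by (metis span_base span_scale singletonI)
        then show False using e2ns by blast
      qed
      have b1: "b \<noteq> a" using bnot[of 1] by simp
      have b2: "b \<noteq> - a" using bnot[of "-1"] by simp
      have b3: "- b \<noteq> a" using bnot[of "-1"] by auto
      have b4: "- b \<noteq> - a" using bnot[of 1] by auto
      have nmb: "norm (- b) = 1" using nb by simp
      interpret W1: wsetup a b using wsetupI[OF uc us na nb b1 b2] .
      interpret W2: wsetup a "- b" using wsetupI[OF uc us na nmb b3 b4] .
      have S1: "inv duality_map ` delta_arc a b \<subseteq> span {W1.u, W1.v}"
        using W1.meridian_span W1.wedge_main H na nb b1 b2 by (simp add: W1.u_def W1.v_def)
      have S2: "inv duality_map ` delta_arc a (-b) \<subseteq> span {W1.u, - W1.v}"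
        using W2.meridian_span W2.wedge_main H na nmb b3 b4
        by (simp add: W1.u_def W1.v_def Ji_neg[OF uc us])
      have "span {W1.u, - W1.v} \<subseteq> span {W1.u, W1.v}"
        by (rule span_minimal) (auto intro: span_base span_neg subspace_span)
      with S2 have S2': "inv duality_map ` delta_arc a (-b) \<subseteq> span {W1.u, W1.v}" by blast
      have spanab: "D \<subseteq> span {a, b}"
      proof -
        have "e1 = norm e1 *\<^sub>R a" "e2 = norm e2 *\<^sub>R b" using e1nz e2nz by (simp_all add: a_def b_def)
        then have "e1 \<in> span {a, b}" "e2 \<in> span {a, b}"
          by (metis span_base span_scale insertI1 insertI2)+
        then have "{e1, e2} \<subseteq> span {a, b}" by blast
        then have "span {e1, e2} \<subseteq> span {a, b}" by (rule span_minimal) (rule subspace_span)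
        then show ?thesis using B(3) e(1) by blast
      qed
      have "inv duality_map ` Ms \<subseteq> span {W1.u, W1.v} \<inter> sphere 0 1"
      proof
        fix x assume "x \<in> inv duality_map ` Ms"
        then obtain c where c: "c \<in> Ms" "x = inv duality_map c" by blast
        have nc: "norm c = 1" using c(1) D(3) by simp
        have "c \<in> span {a, b}" using c(1) D(3) spanab by blast
        then obtain \<alpha> \<beta> where ab: "c = \<alpha> *\<^sub>R a + \<beta> *\<^sub>R b" unfolding span2_iff by blast
        have nmc: "norm (- c) = 1" using nc by simp
        have "x \<in> span {W1.u, W1.v}"
        proof (cases "\<alpha> \<ge> 0")
          case True
          show ?thesis
          proof (cases "\<beta> \<ge> 0")
            case True
            from in_delta[OF nc ab \<open>\<alpha> \<ge> 0\<close> True] have "c \<in> delta_arc a b" .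
            then show ?thesis using S1 c(2) by blast
          next
            case False
            have eq: "c = \<alpha> *\<^sub>R a + (- \<beta>) *\<^sub>R (- b)" using ab by simp
            have "0 \<le> - \<beta>" using False by simp
            from in_delta[OF nc eq \<open>\<alpha> \<ge> 0\<close> this] have "c \<in> delta_arc a (-b)" .
            then show ?thesis using S2' c(2) by blast
          qed
        next
          case aF: False
          have xneg: "x = - inv duality_map (- c)" using c(2) Ji_neg[OF uc us, of "-c"] by simp
          show ?thesis
          proof (cases "\<beta> \<ge> 0")
            case True
            have eq: "- c = (- \<alpha>) *\<^sub>R a + \<beta> *\<^sub>R (- b)" using ab by simp
            have "0 \<le> - \<alpha>" using aF by simp
            from in_delta[OF nmc eq this True] have "- c \<in> delta_arc a (-b)" .
            then have "inv duality_map (- c) \<in> span {W1.u, W1.v}" using S2' by blast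
            then show ?thesis using xneg span_neg by metis
          next
            case False
            have eq: "- c = (- \<alpha>) *\<^sub>R a + (- \<beta>) *\<^sub>R b" using ab by simp
            have "0 \<le> - \<alpha>" "0 \<le> - \<beta>" using aF False by simp_all
            from in_delta[OF nmc eq this] have "- c \<in> delta_arc a b" .
            then have "inv duality_map (- c) \<in> span {W1.u, W1.v}" using S1 by blast
            then show ?thesis using xneg span_neg by metis
          qed
        qed
        moreover have "norm x = 1" using c(2) nc Ji_norm[OF uc us] by simp
        ultimately show "x \<in> span {W1.u, W1.v} \<inter> sphere 0 1" by simp
      qed
      moreover have "meridian (span {W1.u, W1.v} \<inter> sphere 0 1)"
        unfolding meridian_def using W1.dim_span_uv subspace_span by blast
      ultimately show "\<exists>M::'a set. meridian M \<and> inv duality_map ` Ms \<subseteq> M" by blast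
    qed
  next
    assume H: "\<forall>Ms::('a \<Rightarrow>\<^sub>L real) set. meridian Ms \<longrightarrow> (\<exists>M::'a set. meridian M \<and> inv duality_map ` Ms \<subseteq> M)"
    show "\<forall>a b::'a \<Rightarrow>\<^sub>L real. norm a = 1 \<longrightarrow> norm b = 1 \<longrightarrow> b \<noteq> a \<longrightarrow> b \<noteq> - a \<longrightarrow>
             convex (polar_cone (wedge a b))"
    proof (intro allI impI)
      fix a b :: "'a \<Rightarrow>\<^sub>L real"
      assume na: "norm a = 1" and nb: "norm b = 1" and b1: "b \<noteq> a" and b2: "b \<noteq> - a"
      interpret W: wsetup a b using wsetupI[OF uc us na nb b1 b2] .
      have indab: "independent {a, b}"
      proof -
        have "a \<notin> span {b}"
        proof
          assume "a \<in> span {b}"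
          then obtain k where "a = k *\<^sub>R b" by (auto simp: span_singleton)
          then have "1 *\<^sub>R a + (-k) *\<^sub>R b = 0" by simp
          from W.ab_indep[OF this] show False by simp
        qed
        moreover have "b \<noteq> 0" using nb by auto
        ultimately show ?thesis using b1 by (simp add: independent_insert)
      qed
      have "dim (span {a, b}) = 2" using indab b1 by (simp add: dim_eq_card_independent)
      then have "meridian (span {a, b} \<inter> sphere 0 1)" unfolding meridian_def using subspace_span by blast
      then obtain M where M: "meridian M" "inv duality_map ` (span {a, b} \<inter> sphere 0 1) \<subseteq> M" using H by blast
      have "delta_arc a b \<subseteq> span {a, b} \<inter> sphere 0 1"
      proof
        fix c assume "c \<in> delta_arc a b"
        then obtain t where t: "t \<in> {0..1}" "c = W.cc t" using W.delta_eq by auto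
        have "c \<in> span {a, b}" unfolding t(2) W.cc_coeffs span2_iff by blast
        then show "c \<in> span {a, b} \<inter> sphere 0 1" using W.cc_norm t by simp
      qed
      then have "inv duality_map ` delta_arc a b \<subseteq> M" using M(2) by blast
      then show "convex (polar_cone (wedge a b))" using W.wedge_main M(1) by blast
    qed
  qed
  from C1 C2 show ?thesis by blast
qed


end
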